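(* Let $\{\varphi_j\}_{j=1}^\infty\subseteq M(D(\delta_1))$, $\Phi=(\varphi_1,\varphi_2,\dots)$. Then: (i) $M_\Phi$ is a bounded operator from $D(\delta_1)$ to $\oplus_1^\infty D(\delta_1)$ if and only if $\sum_{j=1}^\infty\|\varphi_j\|_{D(\delta_1)}^2<\infty$ and $\sup_{z\in\mathbb{D}}\sum_{j=1}^\infty|\varphi_j(z)|^2<\infty$. (ii) If $\|M_\Phi\|\le1$ and $0<\epsilon^2\le\sum_{j=1}^\infty|\varphi_j(z)|^2$ for all $z\in\mathbb{D}$, then $\Phi(1)=(\varphi_1(1),\varphi_2(1),\dots)\neq0$. (iii) If $\|M_\Phi\|\le1$ and $f=\sum_{i=1}^\infty[\varphi_i-\varphi_i(1)]\overline{\varphi_i(1)}$, then $f\in M(D(\delta_1))$ and $f(1)=0$.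
   Context: $\mathbb{D}$ is the open unit disc. $D(\delta_1)$ is the space of $f\in H^2(\mathbb{D})$ with $f=f(1)+(z-1)g$ for a constant $f(1)$ and some $g\in H^2(\mathbb{D})$, normed by $\|f\|_{D(\delta_1)}^2=\|f\|_{H^2}^2+\|g\|_{H^2}^2$; $f(1)=\lim_{r\to1^-}f(r)$. $M(D(\delta_1))=D(\delta_1)\cap H^\infty(\mathbb{D})$ is its multiplier algebra. $\oplus_1^\infty D(\delta_1)$ is the Hilbert space of sequences $(f_j)$ in $D(\delta_1)$ with $\sum_j\|f_j\|^2_{D(\delta_1)}<\infty$, and $M_\Phi f=(\varphi_jf)_{j=1}^\infty$. *)

theory Defs
  imports "HOL-Analysis.Analysis"
begin

abbreviation disc :: "complex set" where "disc \<equiv> ball 0 1"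

definition taylor_coeff :: "(complex \<Rightarrow> complex) \<Rightarrow> nat \<Rightarrow> complex" where
  "taylor_coeff f n = (deriv ^^ n) f 0 / of_nat (fact n)"

definition H2 :: "(complex \<Rightarrow> complex) set" where
  "H2 = {f. f holomorphic_on disc \<and> summable (\<lambda>n. (cmod (taylor_coeff f n))\<^sup>2)}"

definition H2_norm :: "(complex \<Rightarrow> complex) \<Rightarrow> real" where
  "H2_norm f = sqrt (\<Sum>n. (cmod (taylor_coeff f n))\<^sup>2)"

text \<open>Radial boundary value at 1: f(1) = lim_{r -> 1-} f(r).\<close>
definition bv1 :: "(complex \<Rightarrow> complex) \<Rightarrow> complex" where
  "bv1 f = Lim (at_left (1::real)) (\<lambda>r. f (complex_of_real r))"

definition Dd1 :: "(complex \<Rightarrow> complex) set" where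
  "Dd1 = {f. f \<in> H2 \<and> (\<exists>c g. g \<in> H2 \<and> (\<forall>z\<in>disc. f z = c + (z - 1) * g z))}"

definition Dd1_quot :: "(complex \<Rightarrow> complex) \<Rightarrow> complex \<Rightarrow> complex" where
  "Dd1_quot f z = (f z - bv1 f) / (z - 1)"

definition Dd1_norm :: "(complex \<Rightarrow> complex) \<Rightarrow> real" where
  "Dd1_norm f = sqrt ((H2_norm f)\<^sup>2 + (H2_norm (Dd1_quot f))\<^sup>2)"

text \<open>Multiplier algebra M(D(delta_1)) = D(delta_1) \<inter> H^\<infinity>.\<close>
definition MDd1 :: "(complex \<Rightarrow> complex) set" where
  "MDd1 = {f. f \<in> Dd1 \<and> bounded (f ` disc)}"

definition MPhi_bounded_by :: "(nat \<Rightarrow> complex \<Rightarrow> complex) \<Rightarrow> real \<Rightarrow> bool" where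
  "MPhi_bounded_by \<Phi> C \<longleftrightarrow>
     (\<forall>f\<in>Dd1. (\<forall>j. (\<lambda>z. \<Phi> j z * f z) \<in> Dd1)
        \<and> summable (\<lambda>j. (Dd1_norm (\<lambda>z. \<Phi> j z * f z))\<^sup>2)
        \<and> (\<Sum>j. (Dd1_norm (\<lambda>z. \<Phi> j z * f z))\<^sup>2) \<le> C\<^sup>2 * (Dd1_norm f)\<^sup>2)"

definition MPhi_bounded :: "(nat \<Rightarrow> complex \<Rightarrow> complex) \<Rightarrow> bool" where
  "MPhi_bounded \<Phi> \<longleftrightarrow> (\<exists>C. MPhi_bounded_by \<Phi> C)"

end

theory Submission
  imports Defs "HOL-Complex_Analysis.Complex_Analysis"
begin


lemma tc_cong:
  assumes "\<forall>z\<in>disc. f z = g z"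
  shows "taylor_coeff f = taylor_coeff g"
proof
  fix n
  have "eventually (\<lambda>x. f x = g x) (nhds (0::complex))"
    using assms eventually_nhds_in_open[of disc 0] by (auto elim!: eventually_mono)
  then have "(deriv ^^ n) f 0 = (deriv ^^ n) g 0" by (rule higher_deriv_cong_ev) simp
  then show "taylor_coeff f n = taylor_coeff g n" by (simp add: taylor_coeff_def)
qed

lemma H2_norm_cong: "\<forall>z\<in>disc. f z = g z \<Longrightarrow> H2_norm f = H2_norm g"
  unfolding H2_norm_def by (drule tc_cong) simp

lemma H2_cong: assumes "f \<in> H2" "\<forall>z\<in>disc. f z = g z" shows "g \<in> H2"
proof -
  have "g holomorphic_on disc" using assms holomorphic_cong[of disc disc f g]
    by (simp add: H2_def)
  then show ?thesis using assms tc_cong[OF assms(2)] by (simp add: H2_def)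
qed

lemma tc_series:
  assumes "f holomorphic_on disc" "z \<in> disc"
  shows "(\<lambda>n. taylor_coeff f n * z^n) sums f z"
  using holomorphic_power_series[OF assms] by (simp add: taylor_coeff_def)

lemma CS_inf:
  fixes x y :: "nat \<Rightarrow> real"
  assumes "summable (\<lambda>n. (x n)\<^sup>2)" "summable (\<lambda>n. (y n)\<^sup>2)"
  shows "summable (\<lambda>n. \<bar>x n * y n\<bar>)"
    "(\<Sum>n. \<bar>x n * y n\<bar>) \<le> sqrt (\<Sum>n. (x n)\<^sup>2) * sqrt (\<Sum>n. (y n)\<^sup>2)"
proof -
  have le: "\<bar>x n * y n\<bar> \<le> ((x n)\<^sup>2 + (y n)\<^sup>2)/2" for n
  proof -
    have "0 \<le> (\<bar>x n\<bar> - \<bar>y n\<bar>)\<^sup>2" by simp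
    then show ?thesis by (simp add: power2_eq_square abs_mult algebra_simps)
  qed
  show s: "summable (\<lambda>n. \<bar>x n * y n\<bar>)"
  proof -
    have sg: "summable (\<lambda>n. ((x n)\<^sup>2 + (y n)\<^sup>2)/2)" using assms by (intro summable_divide summable_add)
    show ?thesis by (rule summable_comparison_test'[OF sg, of 0]) (use le in simp)
  qed
  show "(\<Sum>n. \<bar>x n * y n\<bar>) \<le> sqrt (\<Sum>n. (x n)\<^sup>2) * sqrt (\<Sum>n. (y n)\<^sup>2)"
  proof (rule suminf_le_const[OF s])
    fix N
    have "(\<Sum>n<N. \<bar>x n * y n\<bar>) = (\<Sum>n<N. \<bar>x n\<bar> * \<bar>y n\<bar>)" by (simp add: abs_mult)
    also have "\<dots> \<le> L2_set x {..<N} * L2_set y {..<N}" by (rule L2_set_mult_ineq)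
    also have "\<dots> \<le> sqrt (\<Sum>n. (x n)\<^sup>2) * sqrt (\<Sum>n. (y n)\<^sup>2)"
      unfolding L2_set_def
      by (intro mult_mono real_sqrt_le_mono sum_le_suminf assms) (auto intro: suminf_nonneg assms sum_nonneg)
    finally show "(\<Sum>n<N. \<bar>x n * y n\<bar>) \<le> sqrt (\<Sum>n. (x n)\<^sup>2) * sqrt (\<Sum>n. (y n)\<^sup>2)" .
  qed
qed

lemma Mink_inf:
  fixes x y :: "nat \<Rightarrow> real"
  assumes "summable (\<lambda>n. (x n)\<^sup>2)" "summable (\<lambda>n. (y n)\<^sup>2)"
  shows "summable (\<lambda>n. (x n + y n)\<^sup>2)"
    "sqrt (\<Sum>n. (x n + y n)\<^sup>2) \<le> sqrt (\<Sum>n. (x n)\<^sup>2) + sqrt (\<Sum>n. (y n)\<^sup>2)"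
proof -
  have le: "(x n + y n)\<^sup>2 \<le> 2 * (x n)\<^sup>2 + 2 * (y n)\<^sup>2" for n
  proof -
    have "0 \<le> (x n - y n)\<^sup>2" by simp
    then show ?thesis by (simp add: power2_eq_square algebra_simps)
  qed
  show s: "summable (\<lambda>n. (x n + y n)\<^sup>2)"
  proof -
    have sg: "summable (\<lambda>n. 2 * (x n)\<^sup>2 + 2 * (y n)\<^sup>2)" using assms by (intro summable_mult summable_add)
    show ?thesis by (rule summable_comparison_test'[OF sg, of 0]) (use le in simp)
  qed
  have h: "(\<Sum>n. (x n + y n)\<^sup>2) \<le> (sqrt (\<Sum>n. (x n)\<^sup>2) + sqrt (\<Sum>n. (y n)\<^sup>2))\<^sup>2"
  proof (rule suminf_le_const[OF s])
    fix N
    have "L2_set (\<lambda>n. x n + y n) {..<N} \<le> L2_set x {..<N} + L2_set y {..<N}"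
      by (rule L2_set_triangle_ineq)
    also have "\<dots> \<le> sqrt (\<Sum>n. (x n)\<^sup>2) + sqrt (\<Sum>n. (y n)\<^sup>2)"
      unfolding L2_set_def
      by (intro add_mono real_sqrt_le_mono sum_le_suminf assms) (auto intro: suminf_nonneg assms sum_nonneg)
    finally have "sqrt (\<Sum>n<N. (x n + y n)\<^sup>2) \<le> sqrt (\<Sum>n. (x n)\<^sup>2) + sqrt (\<Sum>n. (y n)\<^sup>2)"
      by (simp add: L2_set_def)
    from power_mono[OF this real_sqrt_ge_zero, of 2]
    show "(\<Sum>n<N. (x n + y n)\<^sup>2) \<le> (sqrt (\<Sum>n. (x n)\<^sup>2) + sqrt (\<Sum>n. (y n)\<^sup>2))\<^sup>2"
      by (simp add: sum_nonneg)
  qed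
  show "sqrt (\<Sum>n. (x n + y n)\<^sup>2) \<le> sqrt (\<Sum>n. (x n)\<^sup>2) + sqrt (\<Sum>n. (y n)\<^sup>2)"
    by (rule real_le_lsqrt[OF _ h]) (intro add_nonneg_nonneg real_sqrt_ge_zero suminf_nonneg assms; simp)
qed



lemma H2_hol: "f \<in> H2 \<Longrightarrow> f holomorphic_on disc" by (simp add: H2_def)
lemma H2_summ: "f \<in> H2 \<Longrightarrow> summable (\<lambda>n. (cmod (taylor_coeff f n))\<^sup>2)" by (simp add: H2_def)
lemma H2_norm_sq: "f \<in> H2 \<Longrightarrow> (H2_norm f)\<^sup>2 = (\<Sum>n. (cmod (taylor_coeff f n))\<^sup>2)"
  unfolding H2_norm_def by (intro real_sqrt_pow2 suminf_nonneg H2_summ) auto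
lemma H2_norm_nonneg: "f \<in> H2 \<Longrightarrow> 0 \<le> H2_norm f"
  unfolding H2_norm_def by (intro real_sqrt_ge_zero suminf_nonneg H2_summ) auto

lemma tc_add:
  assumes "f holomorphic_on disc" "g holomorphic_on disc"
  shows "taylor_coeff (\<lambda>z. f z + g z) n = taylor_coeff f n + taylor_coeff g n"
  unfolding taylor_coeff_def using higher_deriv_add[OF assms, of 0 n]
  by (simp add: add_divide_distrib)

lemma tc_cmult:
  assumes "f holomorphic_on disc"
  shows "taylor_coeff (\<lambda>z. c * f z) n = c * taylor_coeff f n"
  unfolding taylor_coeff_def using higher_deriv_cmult[OF assms, of 0 n c] by simp

lemma higher_deriv_const: "(deriv ^^ Suc n) (\<lambda>_. c) = (\<lambda>_. 0)"
  by (induction n) auto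

lemma tc_const: "taylor_coeff (\<lambda>_. c) n = (if n = 0 then c else 0)"
  unfolding taylor_coeff_def by (cases n) (simp_all add: higher_deriv_const del: funpow.simps)

lemma H2_add:
  assumes "f \<in> H2" "g \<in> H2"
  shows "(\<lambda>z. f z + g z) \<in> H2" "H2_norm (\<lambda>z. f z + g z) \<le> H2_norm f + H2_norm g"
proof -
  have hol: "(\<lambda>z. f z + g z) holomorphic_on disc" using assms by (auto simp: H2_def intro: holomorphic_on_add)
  note tc = tc_add[OF H2_hol[OF assms(1)] H2_hol[OF assms(2)]]
  note M = Mink_inf[OF H2_summ[OF assms(1)] H2_summ[OF assms(2)]]
  have le: "(cmod (taylor_coeff (\<lambda>z. f z + g z) n))\<^sup>2 \<le> (cmod (taylor_coeff f n) + cmod (taylor_coeff g n))\<^sup>2" for n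
    unfolding tc by (intro power_mono norm_triangle_ineq) auto
  have s: "summable (\<lambda>n. (cmod (taylor_coeff (\<lambda>z. f z + g z) n))\<^sup>2)"
    by (rule summable_comparison_test'[OF M(1), of 0]) (use le in simp)
  then show "(\<lambda>z. f z + g z) \<in> H2" using hol by (simp add: H2_def)
  have "H2_norm (\<lambda>z. f z + g z) \<le> sqrt (\<Sum>n. (cmod (taylor_coeff f n) + cmod (taylor_coeff g n))\<^sup>2)"
    unfolding H2_norm_def by (intro real_sqrt_le_mono suminf_le s M(1) le)
  also have "\<dots> \<le> H2_norm f + H2_norm g" using M(2) by (simp add: H2_norm_def)
  finally show "H2_norm (\<lambda>z. f z + g z) \<le> H2_norm f + H2_norm g" .
qed

lemma H2_cmult:
  assumes "f \<in> H2"
  shows "(\<lambda>z. c * f z) \<in> H2" "H2_norm (\<lambda>z. c * f z) = cmod c * H2_norm f"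
proof -
  note tc = tc_cmult[OF H2_hol[OF assms]]
  have eq: "(\<lambda>n. (cmod (taylor_coeff (\<lambda>z. c * f z) n))\<^sup>2) = (\<lambda>n. (cmod c)\<^sup>2 * (cmod (taylor_coeff f n))\<^sup>2)"
    by (simp add: tc norm_mult power_mult_distrib)
  show "(\<lambda>z. c * f z) \<in> H2" using assms unfolding H2_def mem_Collect_eq eq
    by (auto intro!: summable_mult holomorphic_on_mult)
  show "H2_norm (\<lambda>z. c * f z) = cmod c * H2_norm f"
    unfolding H2_norm_def eq suminf_mult[OF H2_summ[OF assms]] by (simp add: real_sqrt_mult)
qed

lemma H2_const: "(\<lambda>_. c) \<in> H2" "H2_norm (\<lambda>_. c) = cmod c"
proof -
  have eq: "(\<lambda>n. (cmod (taylor_coeff (\<lambda>_. c) n))\<^sup>2) = (\<lambda>n. if n = 0 then (cmod c)\<^sup>2 else 0)"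
    by (auto simp: tc_const)
  show "(\<lambda>_. c) \<in> H2" unfolding H2_def mem_Collect_eq eq by (auto intro: summable_single)
  have "(\<lambda>n. if n = 0 then (cmod c)\<^sup>2 else 0) sums (cmod c)\<^sup>2"
    using sums_single[of 0 "\<lambda>_. (cmod c)\<^sup>2"] by simp
  then show "H2_norm (\<lambda>_. c) = cmod c" unfolding H2_norm_def eq by (simp add: sums_iff)
qed

lemma H2_minus:
  assumes "f \<in> H2" "g \<in> H2"
  shows "(\<lambda>z. f z - g z) \<in> H2" "H2_norm (\<lambda>z. f z - g z) \<le> H2_norm f + H2_norm g"
proof -
  have e: "(\<lambda>z. f z - g z) = (\<lambda>z. f z + (-1) * g z)" by simp
  show "(\<lambda>z. f z - g z) \<in> H2" unfolding e by (intro H2_add H2_cmult assms)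
  show "H2_norm (\<lambda>z. f z - g z) \<le> H2_norm f + H2_norm g"
    unfolding e using H2_add(2)[OF assms(1) H2_cmult(1)[OF assms(2), of "-1"]] H2_cmult(2)[OF assms(2), of "-1"]
    by simp
qed

lemma H2_sum':
  assumes "finite I" "\<And>i. i \<in> I \<Longrightarrow> f i \<in> H2"
  shows "(\<lambda>z. \<Sum>i\<in>I. f i z) \<in> H2 \<and> H2_norm (\<lambda>z. \<Sum>i\<in>I. f i z) \<le> (\<Sum>i\<in>I. H2_norm (f i))"
  using assms
proof (induction I rule: finite_induct)
  case empty
  show ?case using H2_const[of 0] by simp
next
  case (insert x F)
  then have h: "f x \<in> H2" "(\<lambda>z. \<Sum>i\<in>F. f i z) \<in> H2" "H2_norm (\<lambda>z. \<Sum>i\<in>F. f i z) \<le> (\<Sum>i\<in>F. H2_norm (f i))"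
    by auto
  have e: "(\<lambda>z. \<Sum>i\<in>insert x F. f i z) = (\<lambda>z. f x z + (\<Sum>i\<in>F. f i z))"
    using insert by simp
  show ?case unfolding e using H2_add[OF h(1,2)] h(3) insert by simp
qed

lemma H2_sum:
  assumes "\<And>i. i \<in> I \<Longrightarrow> f i \<in> H2" "finite I"
  shows "(\<lambda>z. \<Sum>i\<in>I. f i z) \<in> H2" "H2_norm (\<lambda>z. \<Sum>i\<in>I. f i z) \<le> (\<Sum>i\<in>I. H2_norm (f i))"
  using H2_sum'[OF assms(2,1)] by auto

lemma pow_sq_swap: "((x::'a::comm_monoid_mult)^n)^2 = (x^2)^n"
  by (metis power_mult mult.commute)

lemma H2_eval:
  assumes "f \<in> H2" "z \<in> disc"
  shows "cmod (f z) \<le> H2_norm f / sqrt (1 - (cmod z)\<^sup>2)"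
proof -
  have nz: "cmod z < 1" using assms by simp
  have g: "(\<lambda>n. ((cmod z)\<^sup>2)^n) sums (1 / (1 - (cmod z)\<^sup>2))"
    by (rule geometric_sums) (use nz in \<open>simp add: abs_square_less_1\<close>)
  have gs: "summable (\<lambda>n. (cmod z ^ n)\<^sup>2)" using g by (simp add: sums_iff pow_sq_swap)
  have gv: "(\<Sum>n. (cmod z ^ n)\<^sup>2) = 1 / (1 - (cmod z)\<^sup>2)" using g
    by (simp add: sums_iff pow_sq_swap)
  note CS = CS_inf[OF H2_summ[OF assms(1)] gs]
  have sm: "summable (\<lambda>n. norm (taylor_coeff f n * z^n))" using CS(1) by (simp add: norm_mult norm_power)
  have "cmod (f z) = cmod (\<Sum>n. taylor_coeff f n * z^n)"
    using tc_series[OF H2_hol[OF assms(1)] assms(2)] by (simp add: sums_iff)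
  also have "\<dots> \<le> (\<Sum>n. norm (taylor_coeff f n * z^n))" by (rule summable_norm[OF sm])
  also have "\<dots> = (\<Sum>n. \<bar>cmod (taylor_coeff f n) * cmod z ^ n\<bar>)" by (simp add: norm_mult norm_power)
  also have "\<dots> \<le> H2_norm f * sqrt (1 / (1 - (cmod z)\<^sup>2))" using CS(2) gv by (simp add: H2_norm_def)
  also have "\<dots> = H2_norm f / sqrt (1 - (cmod z)\<^sup>2)" by (simp add: real_sqrt_divide)
  finally show ?thesis .
qed



lemma cis_int:
  fixes k :: int
  shows "((\<lambda>t. cis (of_int k * t)) has_integral (if k = 0 then complex_of_real (2*pi) else 0)) {0..2*pi}"
proof (cases "k = 0")
  case True
  have "((\<lambda>t. complex_of_real t) has_vector_derivative 1) (at x within {0..2*pi})" for x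
    by (rule has_vector_derivative_real_field) (auto intro!: derivative_eq_intros)
  from fundamental_theorem_of_calculus[OF _ this]
  show ?thesis using True by simp
next
  case False
  define G where "G w = exp (\<i> * of_int k * w) / (\<i> * of_int k)" for w :: complex
  have d: "(G has_field_derivative exp (\<i> * of_int k * w)) (at w)" for w
    unfolding G_def using False by (auto intro!: derivative_eq_intros simp: field_simps)
  have "((\<lambda>t. G (of_real t)) has_vector_derivative cis (of_int k * t)) (at t within {0..2*pi})" for t
    using has_vector_derivative_real_field[OF d[of "of_real t"]] by (simp add: cis_conv_exp mult.assoc)
  from fundamental_theorem_of_calculus[OF _ this]
  have "((\<lambda>t. cis (of_int k * t)) has_integral (G (of_real (2*pi)) - G 0)) {0..2*pi}" by simp
  moreover have "G (of_real (2*pi)) = G 0"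
  proof -
    have "exp (\<i> * of_int k * of_real (2*pi)) = cis (2 * pi * of_int k)"
      by (simp add: cis_conv_exp mult_ac)
    also have "\<dots> = 1" by (rule cis_multiple_2pi) simp
    finally show ?thesis by (simp add: G_def)
  qed
  ultimately show ?thesis using False by simp
qed

lemma poly_parseval:
  fixes b :: "nat \<Rightarrow> complex"
  shows "((\<lambda>t. (cmod (\<Sum>n<N. b n * cis (real n * t)))\<^sup>2) has_integral (2*pi * (\<Sum>n<N. (cmod (b n))\<^sup>2))) {0..2*pi}"
proof -
  have eq: "complex_of_real ((cmod (\<Sum>n<N. b n * cis (real n * t)))\<^sup>2) =
      (\<Sum>n<N. \<Sum>m<N. (b n * cnj (b m)) * cis (of_int (int n - int m) * t))" for t
  proof -
    have "complex_of_real ((cmod (\<Sum>n<N. b n * cis (real n * t)))\<^sup>2) =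
        (\<Sum>n<N. b n * cis (real n * t)) * cnj (\<Sum>m<N. b m * cis (real m * t))"
      by (rule complex_norm_square)
    also have "\<dots> = (\<Sum>n<N. \<Sum>m<N. (b n * cis (real n * t)) * cnj (b m * cis (real m * t)))"
      by (simp add: cnj_sum sum_product)
    also have "\<dots> = (\<Sum>n<N. \<Sum>m<N. (b n * cnj (b m)) * cis (of_int (int n - int m) * t))"
      by (intro sum.cong refl) (simp add: cis_cnj cis_mult algebra_simps)
    finally show ?thesis .
  qed
  have "((\<lambda>t. \<Sum>n<N. \<Sum>m<N. (b n * cnj (b m)) * cis (of_int (int n - int m) * t)) has_integral
        (\<Sum>n<N. \<Sum>m<N. (b n * cnj (b m)) * (if int n - int m = 0 then complex_of_real (2*pi) else 0))) {0..2*pi}"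
    by (intro has_integral_sum finite_lessThan has_integral_mult_right cis_int)
  also have "(\<Sum>n<N. \<Sum>m<N. (b n * cnj (b m)) * (if int n - int m = 0 then complex_of_real (2*pi) else 0))
      = (\<Sum>n<N. (b n * cnj (b n)) * complex_of_real (2*pi))"
    by (intro sum.cong refl) (simp add: if_distrib sum.delta cong: if_cong)
  also have "\<dots> = complex_of_real (2*pi * (\<Sum>n<N. (cmod (b n))\<^sup>2))"
    by (simp add: sum_distrib_left sum_distrib_right mult_ac flip: complex_norm_square)
  finally have "((\<lambda>t. complex_of_real ((cmod (\<Sum>n<N. b n * cis (real n * t)))\<^sup>2)) has_integral
      complex_of_real (2*pi * (\<Sum>n<N. (cmod (b n))\<^sup>2))) {0..2*pi}"
    by (simp only: eq)
  from has_integral_Re[OF this] show ?thesis by simp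
qed



definition mean :: "real \<Rightarrow> (complex \<Rightarrow> complex) \<Rightarrow> real" where
  "mean r h = integral {0..2*pi} (\<lambda>t. (cmod (h (complex_of_real r * cis t)))\<^sup>2) / (2*pi)"

lemma circ_in_disc: "0 \<le> r \<Longrightarrow> r < 1 \<Longrightarrow> complex_of_real r * cis t \<in> disc"
  by (simp add: norm_mult)

lemma cont_circ:
  assumes "continuous_on disc h" "0 \<le> r" "r < 1"
  shows "continuous_on {0..2*pi} (\<lambda>t. (cmod (h (complex_of_real r * cis t)))\<^sup>2)"
proof -
  have "continuous_on {0..2*pi} (\<lambda>t. h (complex_of_real r * cis t))"
    by (rule continuous_on_compose2[OF assms(1)]) (auto intro!: continuous_intros simp: norm_mult assms)
  then show ?thesis by (intro continuous_intros)
qed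

lemma int_unif_conv:
  fixes F :: "nat \<Rightarrow> real \<Rightarrow> real" and G :: "real \<Rightarrow> real" and e :: "nat \<Rightarrow> real"
  assumes "\<And>n. continuous_on {0..2*pi} (F n)" "continuous_on {0..2*pi} G"
    "\<And>n t. t \<in> {0..2*pi} \<Longrightarrow> \<bar>F n t - G t\<bar> \<le> e n" "e \<longlonglongrightarrow> 0"
  shows "(\<lambda>n. integral {0..2*pi} (F n)) \<longlonglongrightarrow> integral {0..2*pi} G"
proof -
  have b: "norm (integral {0..2*pi} (F n) - integral {0..2*pi} G) \<le> e n * (2*pi - 0)" for n
  proof -
    have "integral {0..2*pi} (F n) - integral {0..2*pi} G = integral {0..2*pi} (\<lambda>t. F n t - G t)"
      by (intro integral_diff[symmetric] integrable_continuous_interval assms)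
    also have "norm \<dots> \<le> e n * (2*pi - 0)"
      by (rule integral_bound) (use assms in \<open>auto intro!: continuous_intros\<close>)
    finally show ?thesis .
  qed
  have "(\<lambda>n. integral {0..2*pi} (F n) - integral {0..2*pi} G) \<longlonglongrightarrow> 0"
    by (rule Lim_null_comparison[OF always_eventually[OF allI[OF b]]])
       (use tendsto_mult[OF assms(4) tendsto_const[of "2*pi - 0"]] in simp)
  then show ?thesis by (rule LIM_zero_cancel)
qed

lemma sq_diff_abs:
  fixes x y :: real
  assumes "0 \<le> x" "0 \<le> y"
  shows "\<bar>x\<^sup>2 - y\<^sup>2\<bar> = \<bar>x - y\<bar> * (x + y)"
proof -
  have "x\<^sup>2 - y\<^sup>2 = (x - y) * (x + y)" by (simp add: power2_eq_square algebra_simps)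
  then show ?thesis using assms by (simp add: abs_mult)
qed

lemma parseval:
  assumes hol: "h holomorphic_on disc" and r: "0 \<le> r" "r < 1"
  shows "summable (\<lambda>n. (cmod (taylor_coeff h n) * r^n)\<^sup>2)"
    "mean r h = (\<Sum>n. (cmod (taylor_coeff h n) * r^n)\<^sup>2)"
proof -
  define a where "a = taylor_coeff h"
  define A where "A n = cmod (a n) * r^n" for n
  define \<rho> where "\<rho> = (1 + r) / 2"
  have \<rho>: "r < \<rho>" "\<rho> < 1" using r by (auto simp: \<rho>_def)
  have "summable (\<lambda>n. a n * complex_of_real \<rho> ^ n)"
    using tc_series[OF hol, of "complex_of_real \<rho>"] \<rho> r unfolding a_def by (auto simp: sums_iff)
  from powser_insidea[OF this, of "complex_of_real r"]
  have sA: "summable A" using \<rho> r unfolding A_def by (simp add: norm_mult norm_power)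
  have A0: "0 \<le> A n" for n using r by (simp add: A_def)
  define T where "T = suminf A"
  have AT: "A n \<le> T" for n unfolding T_def
    using sum_le_suminf[OF sA, of "{n}"] A0 by auto
  have T0: "0 \<le> T" using A0[of 0] AT[of 0] by linarith
  have sA2: "summable (\<lambda>n. (A n)\<^sup>2)"
  proof (rule summable_comparison_test'[of "\<lambda>n. T * A n" 0])
    show "summable (\<lambda>n. T * A n)" using sA by (rule summable_mult)
    show "norm ((A n)\<^sup>2) \<le> T * A n" for n using AT[of n] A0[of n]
      by (simp add: power2_eq_square mult_right_mono)
  qed
  then show "summable (\<lambda>n. (cmod (taylor_coeff h n) * r^n)\<^sup>2)" by (simp add: A_def a_def)
  define b where "b n = a n * complex_of_real (r^n)" for n
  have nb: "cmod (b n) = A n" for n using r by (simp add: b_def A_def norm_mult norm_power)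
  define S where "S N t = (\<Sum>n<N. b n * cis (real n * t))" for N t
  define e where "e N = 2 * T * (T - sum A {..<N})" for N
  have hser: "(\<lambda>n. b n * cis (real n * t)) sums h (complex_of_real r * cis t)" for t
  proof -
    have "(\<lambda>n. a n * (complex_of_real r * cis t)^n) sums h (complex_of_real r * cis t)"
      unfolding a_def by (rule tc_series[OF hol circ_in_disc[OF r]])
    then show ?thesis by (simp add: b_def power_mult_distrib Complex.DeMoivre mult_ac)
  qed
  have bound: "\<bar>(cmod (S N t))\<^sup>2 - (cmod (h (complex_of_real r * cis t)))\<^sup>2\<bar> \<le> e N" for N t
  proof -
    let ?f = "\<lambda>n. b n * cis (real n * t)"
    have nf: "norm (?f n) = A n" for n by (simp add: norm_mult nb)
    have sf: "summable (\<lambda>n. norm (?f n))" using sA by (simp add: nf)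
    have hv: "h (complex_of_real r * cis t) = suminf ?f" using hser[of t] by (simp add: sums_iff)
    have d: "h (complex_of_real r * cis t) - S N t = (\<Sum>n. ?f (n + N))"
      unfolding hv S_def using suminf_split_initial_segment[OF summable_norm_cancel[OF sf], of N] by simp
    have "norm (\<Sum>n. ?f (n + N)) \<le> (\<Sum>n. norm (?f (n + N)))"
      by (rule summable_norm) (use summable_ignore_initial_segment[OF sf, of N] in simp)
    also have "\<dots> = (\<Sum>n. A (n + N))" using nf by presburger
    also have "\<dots> = T - sum A {..<N}" unfolding T_def using suminf_split_initial_segment[OF sA, of N] by simp
    finally have dist: "cmod (h (complex_of_real r * cis t) - S N t) \<le> T - sum A {..<N}" using d by simp
    have hS: "cmod (S N t) \<le> T"
    proof -
      have "cmod (S N t) \<le> (\<Sum>n<N. norm (?f n))" unfolding S_def by (rule norm_sum)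
      also have "\<dots> = sum A {..<N}" by (simp add: nf)
      also have "\<dots> \<le> T" unfolding T_def by (rule sum_le_suminf[OF sA]) (auto simp: A0)
      finally show ?thesis .
    qed
    have hh: "cmod (h (complex_of_real r * cis t)) \<le> T"
      unfolding hv T_def using summable_norm[OF sf] by (simp add: nf)
    have "\<bar>(cmod (S N t))\<^sup>2 - (cmod (h (complex_of_real r * cis t)))\<^sup>2\<bar>
        = \<bar>cmod (S N t) - cmod (h (complex_of_real r * cis t))\<bar> * (cmod (S N t) + cmod (h (complex_of_real r * cis t)))"
      by (rule sq_diff_abs) auto
    also have "\<dots> \<le> (T - sum A {..<N}) * (2 * T)"
    proof (rule mult_mono)
      have "\<bar>cmod (S N t) - cmod (h (complex_of_real r * cis t))\<bar> \<le> cmod (S N t - h (complex_of_real r * cis t))"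
        by (rule norm_triangle_ineq3)
      also have "\<dots> \<le> T - sum A {..<N}" using dist by (simp add: norm_minus_commute)
      finally show "\<bar>cmod (S N t) - cmod (h (complex_of_real r * cis t))\<bar> \<le> T - sum A {..<N}" .
    qed (use hS hh sum_le_suminf[OF sA, of "{..<N}"] A0 in \<open>auto simp: T_def\<close>)
    finally show ?thesis by (simp add: e_def mult_ac)
  qed
  have e0: "e \<longlonglongrightarrow> 0"
  proof -
    have "(\<lambda>N. T - sum A {..<N}) \<longlonglongrightarrow> T - T" unfolding T_def
      by (intro tendsto_diff tendsto_const summable_LIMSEQ sA)
    then have "(\<lambda>N. 2 * T * (T - sum A {..<N})) \<longlonglongrightarrow> 2 * T * 0"
      by (intro tendsto_mult tendsto_const) simp
    then show ?thesis by (simp add: e_def[abs_def])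
  qed
  have contS: "continuous_on {0..2*pi} (\<lambda>t. (cmod (S N t))\<^sup>2)" for N
    unfolding S_def by (intro continuous_intros)
  have contH: "continuous_on {0..2*pi} (\<lambda>t. (cmod (h (complex_of_real r * cis t)))\<^sup>2)"
    by (rule cont_circ[OF holomorphic_on_imp_continuous_on[OF hol] r])
  have lim1: "(\<lambda>N. integral {0..2*pi} (\<lambda>t. (cmod (S N t))\<^sup>2)) \<longlonglongrightarrow>
      integral {0..2*pi} (\<lambda>t. (cmod (h (complex_of_real r * cis t)))\<^sup>2)"
    by (rule int_unif_conv[OF contS contH bound e0])
  have ival: "integral {0..2*pi} (\<lambda>t. (cmod (S N t))\<^sup>2) = 2*pi * (\<Sum>n<N. (A n)\<^sup>2)" for N
    using poly_parseval[of b N] unfolding S_def nb by (simp add: integral_unique)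
  have lim2: "(\<lambda>N. integral {0..2*pi} (\<lambda>t. (cmod (S N t))\<^sup>2)) \<longlonglongrightarrow> 2*pi * (\<Sum>n. (A n)\<^sup>2)"
    unfolding ival by (intro tendsto_mult tendsto_const summable_LIMSEQ sA2)
  have "integral {0..2*pi} (\<lambda>t. (cmod (h (complex_of_real r * cis t)))\<^sup>2) = 2*pi * (\<Sum>n. (A n)\<^sup>2)"
    using LIMSEQ_unique[OF lim1 lim2] .
  then show "mean r h = (\<Sum>n. (cmod (taylor_coeff h n) * r^n)\<^sup>2)"
    by (simp add: mean_def A_def a_def)
qed



lemma mean_le_H2:
  assumes "h \<in> H2" "0 \<le> r" "r < 1"
  shows "mean r h \<le> (H2_norm h)\<^sup>2"
proof -
  note P = parseval[OF H2_hol[OF assms(1)] assms(2,3)]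
  have "mean r h = (\<Sum>n. (cmod (taylor_coeff h n) * r^n)\<^sup>2)" by (rule P(2))
  also have "\<dots> \<le> (\<Sum>n. (cmod (taylor_coeff h n))\<^sup>2)"
  proof (rule suminf_le[OF _ P(1) H2_summ[OF assms(1)]])
    fix n
    have "r^n \<le> 1" using assms by (simp add: power_le_one)
    then have "cmod (taylor_coeff h n) * r^n \<le> cmod (taylor_coeff h n)"
      by (simp add: mult_left_le)
    then show "(cmod (taylor_coeff h n) * r^n)\<^sup>2 \<le> (cmod (taylor_coeff h n))\<^sup>2"
      using assms by (intro power_mono) auto
  qed
  also have "\<dots> = (H2_norm h)\<^sup>2" using H2_norm_sq[OF assms(1)] by simp
  finally show ?thesis .
qed

lemma H2_from_means:
  fixes f :: "'i \<Rightarrow> complex \<Rightarrow> complex"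
  assumes J: "finite J" and hol: "\<And>j. j \<in> J \<Longrightarrow> f j holomorphic_on disc"
    and M: "\<And>r. 0 \<le> r \<Longrightarrow> r < 1 \<Longrightarrow> (\<Sum>j\<in>J. mean r (f j)) \<le> C"
  shows "\<forall>j\<in>J. f j \<in> H2" "(\<Sum>j\<in>J. (H2_norm (f j))\<^sup>2) \<le> C"
proof -
  define a where "a j n = (cmod (taylor_coeff (f j) n))\<^sup>2" for j n
  have a0: "0 \<le> a j n" for j n by (simp add: a_def)
  have Q: "(\<Sum>j\<in>J. \<Sum>n<K. a j n) \<le> C" for K
  proof -
    define P where "P r = (\<Sum>j\<in>J. \<Sum>n<K. (cmod (taylor_coeff (f j) n) * r^n)\<^sup>2)" for r :: real
    have Pr: "P r \<le> C" if r: "0 \<le> r" "r < 1" for r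
    proof -
      have "P r \<le> (\<Sum>j\<in>J. mean r (f j))"
        unfolding P_def
      proof (rule sum_mono)
        fix j assume j: "j \<in> J"
        note Pj = parseval[OF hol[OF j] r]
        show "(\<Sum>n<K. (cmod (taylor_coeff (f j) n) * r ^ n)\<^sup>2) \<le> mean r (f j)"
          unfolding Pj(2) by (rule sum_le_suminf[OF Pj(1)]) auto
      qed
      also have "\<dots> \<le> C" by (rule M[OF r])
      finally show ?thesis .
    qed
    define rs where "rs m = real m / real (Suc m)" for m
    have rs: "0 \<le> rs m" "rs m < 1" for m by (auto simp: rs_def)
    have "rs \<longlonglongrightarrow> 1" unfolding rs_def by (rule LIMSEQ_n_over_Suc_n)
    then have "(\<lambda>m. P (rs m)) \<longlonglongrightarrow> P 1"
      unfolding P_def by (intro tendsto_intros)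
    then have "P 1 \<le> C" by (rule LIMSEQ_le_const2) (use Pr rs in auto)
    then show ?thesis by (simp add: P_def a_def)
  qed
  have sj: "summable (a j)" if j: "j \<in> J" for j
  proof (rule summableI_nonneg_bounded[OF a0])
    fix K
    have "(\<Sum>n<K. a j n) \<le> (\<Sum>j\<in>J. \<Sum>n<K. a j n)"
      by (rule member_le_sum[OF j]) (auto intro: sum_nonneg a0 J)
    then show "(\<Sum>n<K. a j n) \<le> C" using Q[of K] by linarith
  qed
  show "\<forall>j\<in>J. f j \<in> H2" using sj hol unfolding a_def[abs_def] by (auto simp: H2_def)
  have "(\<lambda>K. \<Sum>j\<in>J. \<Sum>n<K. a j n) \<longlonglongrightarrow> (\<Sum>j\<in>J. suminf (a j))"
    by (intro tendsto_sum summable_LIMSEQ sj)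
  then have "(\<Sum>j\<in>J. suminf (a j)) \<le> C" by (rule LIMSEQ_le_const2) (use Q in auto)
  moreover have "(H2_norm (f j))\<^sup>2 = suminf (a j)" if "j \<in> J" for j
    using H2_norm_sq[of "f j"] sj[OF that] hol[OF that] unfolding a_def[abs_def] by (auto simp: H2_def)
  ultimately show "(\<Sum>j\<in>J. (H2_norm (f j))\<^sup>2) \<le> C" by simp
qed



lemma H2_mult_fam:
  fixes \<phi> :: "'i \<Rightarrow> complex \<Rightarrow> complex"
  assumes J: "finite J" and hol: "\<And>j. j \<in> J \<Longrightarrow> \<phi> j holomorphic_on disc"
    and h: "h \<in> H2" and B: "\<And>z. z \<in> disc \<Longrightarrow> (\<Sum>j\<in>J. (cmod (\<phi> j z))\<^sup>2) \<le> B"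
  shows "\<forall>j\<in>J. (\<lambda>z. \<phi> j z * h z) \<in> H2"
    "(\<Sum>j\<in>J. (H2_norm (\<lambda>z. \<phi> j z * h z))\<^sup>2) \<le> B * (H2_norm h)\<^sup>2"
proof -
  have B0: "0 \<le> B" using B[of 0] by (meson order.trans sum_nonneg zero_le_power2 centre_in_ball zero_less_one)
  have holh: "h holomorphic_on disc" using h by (simp add: H2_def)
  have M: "(\<Sum>j\<in>J. mean r (\<lambda>z. \<phi> j z * h z)) \<le> B * (H2_norm h)\<^sup>2" if r: "0 \<le> r" "r < 1" for r
  proof -
    let ?w = "\<lambda>t. complex_of_real r * cis t"
    have ct: "continuous_on {0..2*pi} (\<lambda>t. (cmod ((\<lambda>z. \<phi> j z * h z) (?w t)))\<^sup>2)" if "j \<in> J" for j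
      by (rule cont_circ[OF holomorphic_on_imp_continuous_on r])
         (use hol[OF that] holh in \<open>auto intro: holomorphic_on_mult\<close>)
    have ch: "continuous_on {0..2*pi} (\<lambda>t. (cmod (h (?w t)))\<^sup>2)"
      by (rule cont_circ[OF holomorphic_on_imp_continuous_on[OF holh] r])
    have "(\<Sum>j\<in>J. mean r (\<lambda>z. \<phi> j z * h z))
        = integral {0..2*pi} (\<lambda>t. \<Sum>j\<in>J. (cmod (\<phi> j (?w t) * h (?w t)))\<^sup>2) / (2*pi)"
      unfolding mean_def sum_divide_distrib[symmetric]
      by (subst integral_sum[OF J]) (use ct integrable_continuous_interval in auto)
    also have "\<dots> \<le> integral {0..2*pi} (\<lambda>t. B * (cmod (h (?w t)))\<^sup>2) / (2*pi)"
    proof (intro divide_right_mono integral_le)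
      show "(\<lambda>t. \<Sum>j\<in>J. (cmod (\<phi> j (?w t) * h (?w t)))\<^sup>2) integrable_on {0..2*pi}"
        by (intro integrable_sum J integrable_continuous_interval) (use ct in auto)
      show "(\<lambda>t. B * (cmod (h (?w t)))\<^sup>2) integrable_on {0..2*pi}"
        by (intro integrable_continuous_interval continuous_intros ch)
      fix t
      have "(\<Sum>j\<in>J. (cmod (\<phi> j (?w t) * h (?w t)))\<^sup>2) = (\<Sum>j\<in>J. (cmod (\<phi> j (?w t)))\<^sup>2) * (cmod (h (?w t)))\<^sup>2"
        by (simp add: norm_mult power_mult_distrib sum_distrib_right)
      also have "\<dots> \<le> B * (cmod (h (?w t)))\<^sup>2"
        by (intro mult_right_mono B circ_in_disc r) auto
      finally show "(\<Sum>j\<in>J. (cmod (\<phi> j (?w t) * h (?w t)))\<^sup>2) \<le> B * (cmod (h (?w t)))\<^sup>2" .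
    qed simp
    also have "\<dots> = B * mean r h" by (simp add: mean_def)
    also have "\<dots> \<le> B * (H2_norm h)\<^sup>2" by (intro mult_left_mono mean_le_H2 h r B0)
    finally show ?thesis .
  qed
  have hol2: "(\<lambda>z. \<phi> j z * h z) holomorphic_on disc" if "j \<in> J" for j
    using hol[OF that] holh by (rule holomorphic_on_mult)
  show "\<forall>j\<in>J. (\<lambda>z. \<phi> j z * h z) \<in> H2" "(\<Sum>j\<in>J. (H2_norm (\<lambda>z. \<phi> j z * h z))\<^sup>2) \<le> B * (H2_norm h)\<^sup>2"
    using H2_from_means[OF J hol2 M] by auto
qed

lemma H2_mult:
  assumes "\<phi> holomorphic_on disc" "h \<in> H2" "\<And>z. z \<in> disc \<Longrightarrow> cmod (\<phi> z) \<le> K"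
  shows "(\<lambda>z. \<phi> z * h z) \<in> H2" "H2_norm (\<lambda>z. \<phi> z * h z) \<le> K * H2_norm h"
proof -
  have K0: "0 \<le> K" using assms(3)[of 0] by (meson norm_ge_zero order.trans centre_in_ball zero_less_one)
  have b: "(\<Sum>j\<in>{()}. (cmod ((\<lambda>_. \<phi>) j z))\<^sup>2) \<le> K\<^sup>2" if "z \<in> disc" for z
    using assms(3)[OF that] by (simp add: power_mono)
  note R = H2_mult_fam[of "{()}" "\<lambda>_. \<phi>" h "K\<^sup>2", OF _ _ assms(2) b]
  show "(\<lambda>z. \<phi> z * h z) \<in> H2" using R assms(1) by auto
  have "(H2_norm (\<lambda>z. \<phi> z * h z))\<^sup>2 \<le> (K * H2_norm h)\<^sup>2" using R assms(1) by (simp add: power_mult_distrib)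
  then show "H2_norm (\<lambda>z. \<phi> z * h z) \<le> K * H2_norm h"
    by (rule power2_le_imp_le) (use K0 H2_norm_nonneg[OF assms(2)] in simp)
qed



lemma bv1_eq:
  assumes g: "g \<in> H2" and f: "\<forall>z\<in>disc. f z = c + (z - 1) * g z"
  shows "bv1 f = c"
proof -
  have "((\<lambda>r. f (complex_of_real r) - c) \<longlongrightarrow> 0) (at_left 1)"
  proof (rule Lim_null_comparison)
    show "eventually (\<lambda>r. norm (f (complex_of_real r) - c) \<le> H2_norm g * sqrt (1 - r)) (at_left (1::real))"
      using eventually_at_left_real[OF zero_less_one]
    proof (rule eventually_mono)
      fix r :: real assume r: "r \<in> {0<..<1}"
      have zd: "complex_of_real r \<in> disc" using r by auto
      have e1: "f (complex_of_real r) - c = (complex_of_real r - 1) * g (complex_of_real r)"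
        using f zd by simp
      have "cmod (complex_of_real r - 1) = \<bar>r - 1\<bar>" by (metis norm_of_real of_real_1 of_real_diff)
      then have "cmod (complex_of_real r - 1) = 1 - r" using r by simp
      then have "norm (f (complex_of_real r) - c) = (1 - r) * cmod (g (complex_of_real r))"
        unfolding e1 norm_mult by simp
      also have "\<dots> \<le> (1 - r) * (H2_norm g / sqrt (1 - r\<^sup>2))"
        using H2_eval[OF g zd] r by (intro mult_left_mono) auto
      also have "\<dots> \<le> H2_norm g * sqrt (1 - r)"
      proof -
        have p: "0 < sqrt (1 - r)" using r by simp
        have r2: "r\<^sup>2 \<le> r" using r by (simp add: power2_eq_square mult_le_cancel_right1)
        have a: "sqrt (1 - r) \<le> sqrt (1 - r\<^sup>2)" using r2 by (intro real_sqrt_le_mono) simp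
        have N0: "0 \<le> H2_norm g" by (rule H2_norm_nonneg[OF g])
        have "H2_norm g / sqrt (1 - r\<^sup>2) \<le> H2_norm g / sqrt (1 - r)"
          by (rule divide_left_mono[OF a N0]) (use p a in simp)
        then have "(1 - r) * (H2_norm g / sqrt (1 - r\<^sup>2)) \<le> (1 - r) * (H2_norm g / sqrt (1 - r))"
          using r by (intro mult_left_mono) auto
        also have "\<dots> = H2_norm g * sqrt (1 - r)"
        proof -
          define s where "s = sqrt (1 - r)"
          have s0: "0 < s" using p by (simp add: s_def)
          have ss: "1 - r = s * s" using r by (simp add: s_def)
          have "(1 - r) * (H2_norm g / s) = H2_norm g * s" unfolding ss using s0 by (simp add: field_simps)
          then show ?thesis by (simp add: s_def)
        qed
        finally show ?thesis .
      qed
      finally show "norm (f (complex_of_real r) - c) \<le> H2_norm g * sqrt (1 - r)" .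
    qed
    have "((\<lambda>r. H2_norm g * sqrt (1 - r)) \<longlongrightarrow> H2_norm g * sqrt (1 - 1)) (at_left (1::real))"
      by (intro tendsto_intros)
    then show "((\<lambda>r. H2_norm g * sqrt (1 - r)) \<longlongrightarrow> 0) (at_left (1::real))" by simp
  qed
  then have "((\<lambda>r. f (complex_of_real r)) \<longlongrightarrow> c) (at_left 1)" by (rule LIM_zero_cancel)
  then show ?thesis unfolding bv1_def by (intro tendsto_Lim) auto
qed

lemma Dd1_intro:
  assumes g: "g \<in> H2" and f: "\<forall>z\<in>disc. f z = c + (z - 1) * g z"
  shows "f \<in> Dd1" "f \<in> H2" "bv1 f = c" "\<forall>z\<in>disc. Dd1_quot f z = g z" "Dd1_quot f \<in> H2"
    "H2_norm (Dd1_quot f) = H2_norm g" "(Dd1_norm f)\<^sup>2 = (H2_norm f)\<^sup>2 + (H2_norm g)\<^sup>2"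
proof -
  have m: "(\<lambda>z. (z - 1) * g z) \<in> H2"
  proof (rule H2_mult(1)[OF _ g, of _ 2])
    show "(\<lambda>z. z - 1) holomorphic_on disc" by (intro holomorphic_intros)
    fix z :: complex assume "z \<in> disc"
    then have "cmod z < 1" by simp
    moreover have "cmod (z - 1) \<le> cmod z + cmod (1::complex)" by (rule norm_triangle_ineq4)
    ultimately show "cmod (z - 1) \<le> 2" by simp
  qed
  have "(\<lambda>z. c + (z - 1) * g z) \<in> H2" using H2_add(1)[OF H2_const(1) m] by simp
  then show fH: "f \<in> H2" by (rule H2_cong) (use f in auto)
  then show "f \<in> Dd1" using g f by (auto simp: Dd1_def)
  show bv: "bv1 f = c" by (rule bv1_eq[OF g f])
  show q: "\<forall>z\<in>disc. Dd1_quot f z = g z"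
  proof
    fix z :: complex assume z: "z \<in> disc"
    then have "z \<noteq> 1" by auto
    then show "Dd1_quot f z = g z" using f z bv by (simp add: Dd1_quot_def)
  qed
  show "Dd1_quot f \<in> H2" by (rule H2_cong[OF g]) (use q in auto)
  show hq: "H2_norm (Dd1_quot f) = H2_norm g" by (rule H2_norm_cong) (use q in auto)
  show "(Dd1_norm f)\<^sup>2 = (H2_norm f)\<^sup>2 + (H2_norm g)\<^sup>2"
    unfolding Dd1_norm_def hq by simp
qed

lemma Dd1_elim:
  assumes "f \<in> Dd1"
  shows "f \<in> H2" "Dd1_quot f \<in> H2" "\<forall>z\<in>disc. f z = bv1 f + (z - 1) * Dd1_quot f z"
    "(Dd1_norm f)\<^sup>2 = (H2_norm f)\<^sup>2 + (H2_norm (Dd1_quot f))\<^sup>2"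
proof -
  obtain c g where g: "g \<in> H2" and f: "\<forall>z\<in>disc. f z = c + (z - 1) * g z"
    using assms by (auto simp: Dd1_def)
  note I = Dd1_intro[OF g f]
  show "f \<in> H2" "Dd1_quot f \<in> H2" using I by auto
  show "\<forall>z\<in>disc. f z = bv1 f + (z - 1) * Dd1_quot f z" using I f by auto
  show "(Dd1_norm f)\<^sup>2 = (H2_norm f)\<^sup>2 + (H2_norm (Dd1_quot f))\<^sup>2"
    unfolding Dd1_norm_def by simp
qed

lemma Dd1_norm_nonneg: "0 \<le> Dd1_norm f"
  by (simp add: Dd1_norm_def)

lemma Dd1_norm_ge:
  assumes "f \<in> Dd1"
  shows "H2_norm f \<le> Dd1_norm f" "H2_norm (Dd1_quot f) \<le> Dd1_norm f"
  unfolding Dd1_norm_def by (auto intro: real_le_rsqrt)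

lemma bv1_bound:
  assumes "f \<in> Dd1"
  shows "cmod (bv1 f) \<le> H2_norm f + H2_norm (Dd1_quot f)" "(cmod (bv1 f))\<^sup>2 \<le> 2 * (Dd1_norm f)\<^sup>2"
proof -
  note E = Dd1_elim[OF assms]
  have "f 0 = bv1 f - Dd1_quot f 0" using E(3) by auto
  then have "bv1 f = f 0 + Dd1_quot f 0" by simp
  then have "cmod (bv1 f) \<le> cmod (f 0) + cmod (Dd1_quot f 0)" by (simp add: norm_triangle_ineq)
  also have "\<dots> \<le> H2_norm f + H2_norm (Dd1_quot f)"
    using H2_eval[OF E(1), of 0] H2_eval[OF E(2), of 0] by simp
  finally show b: "cmod (bv1 f) \<le> H2_norm f + H2_norm (Dd1_quot f)" .
  have "(cmod (bv1 f))\<^sup>2 \<le> (H2_norm f + H2_norm (Dd1_quot f))\<^sup>2"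
    using b by (intro power_mono) auto
  also have "\<dots> \<le> 2 * ((H2_norm f)\<^sup>2 + (H2_norm (Dd1_quot f))\<^sup>2)"
  proof -
    have "0 \<le> (H2_norm f - H2_norm (Dd1_quot f))\<^sup>2" by simp
    then show ?thesis by (simp add: power2_eq_square algebra_simps)
  qed
  finally show "(cmod (bv1 f))\<^sup>2 \<le> 2 * (Dd1_norm f)\<^sup>2" using E(4) by simp
qed

lemma Dd1_add:
  assumes "f \<in> Dd1" "g \<in> Dd1"
  shows "(\<lambda>z. f z + g z) \<in> Dd1" "Dd1_norm (\<lambda>z. f z + g z) \<le> Dd1_norm f + Dd1_norm g"
proof -
  note F = Dd1_elim[OF assms(1)] and G = Dd1_elim[OF assms(2)]
  have q: "Dd1_quot f \<in> H2" "Dd1_quot g \<in> H2" using F G by auto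
  have e: "\<forall>z\<in>disc. f z + g z = (bv1 f + bv1 g) + (z - 1) * (Dd1_quot f z + Dd1_quot g z)"
  proof
    fix z :: complex assume "z \<in> disc"
    then have "f z = bv1 f + (z - 1) * Dd1_quot f z" "g z = bv1 g + (z - 1) * Dd1_quot g z" using F(3) G(3) by blast+
    then show "f z + g z = (bv1 f + bv1 g) + (z - 1) * (Dd1_quot f z + Dd1_quot g z)" by (simp add: algebra_simps)
  qed
  note I = Dd1_intro[OF H2_add(1)[OF q] e]
  show "(\<lambda>z. f z + g z) \<in> Dd1" using I by auto
  have "Dd1_norm (\<lambda>z. f z + g z) = sqrt ((H2_norm (\<lambda>z. f z + g z))\<^sup>2 + (H2_norm (\<lambda>z. Dd1_quot f z + Dd1_quot g z))\<^sup>2)"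
    using real_sqrt_unique[OF I(7) Dd1_norm_nonneg] by simp
  also have "\<dots> \<le> sqrt ((H2_norm f + H2_norm g)\<^sup>2 + (H2_norm (Dd1_quot f) + H2_norm (Dd1_quot g))\<^sup>2)"
    by (intro real_sqrt_le_mono add_mono power_mono H2_add q F(1) G(1) H2_norm_nonneg)
  also have "\<dots> \<le> sqrt ((H2_norm f)\<^sup>2 + (H2_norm (Dd1_quot f))\<^sup>2) + sqrt ((H2_norm g)\<^sup>2 + (H2_norm (Dd1_quot g))\<^sup>2)"
    by (rule real_sqrt_sum_squares_triangle_ineq)
  also have "\<dots> = Dd1_norm f + Dd1_norm g" by (simp add: Dd1_norm_def)
  finally show "Dd1_norm (\<lambda>z. f z + g z) \<le> Dd1_norm f + Dd1_norm g" .
qed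

lemma Dd1_cmult:
  assumes "f \<in> Dd1"
  shows "(\<lambda>z. c * f z) \<in> Dd1" "Dd1_norm (\<lambda>z. c * f z) = cmod c * Dd1_norm f"
proof -
  note F = Dd1_elim[OF assms]
  have e: "\<forall>z\<in>disc. c * f z = c * bv1 f + (z - 1) * (c * Dd1_quot f z)"
  proof
    fix z :: complex assume "z \<in> disc"
    then have "f z = bv1 f + (z - 1) * Dd1_quot f z" using F(3) by blast
    then show "c * f z = c * bv1 f + (z - 1) * (c * Dd1_quot f z)" by (simp only:) (simp add: algebra_simps)
  qed
  note I = Dd1_intro[OF H2_cmult(1)[OF F(2)] e]
  show "(\<lambda>z. c * f z) \<in> Dd1" using I by auto
  have "(Dd1_norm (\<lambda>z. c * f z))\<^sup>2 = (cmod c * Dd1_norm f)\<^sup>2"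
    using I(7) F(4) by (simp add: H2_cmult F(1,2) power_mult_distrib algebra_simps)
  then show "Dd1_norm (\<lambda>z. c * f z) = cmod c * Dd1_norm f"
    by (rule power2_eq_imp_eq) (auto intro: Dd1_norm_nonneg mult_nonneg_nonneg)
qed

lemma Dd1_sum:
  assumes "finite I" "\<And>i. i \<in> I \<Longrightarrow> f i \<in> Dd1"
  shows "(\<lambda>z. \<Sum>i\<in>I. f i z) \<in> Dd1 \<and> Dd1_norm (\<lambda>z. \<Sum>i\<in>I. f i z) \<le> (\<Sum>i\<in>I. Dd1_norm (f i))"
  using assms
proof (induction I rule: finite_induct)
  case empty
  have e: "\<forall>z\<in>disc. (\<lambda>z. 0::complex) z = 0 + (z - 1) * 0" by simp
  note I = Dd1_intro[OF H2_const(1) e]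
  have "(Dd1_norm (\<lambda>z. 0::complex))\<^sup>2 = 0" using I(7) H2_const(2)[of 0] by simp
  then show ?case using I(1) by simp
next
  case (insert x F)
  then have h: "f x \<in> Dd1" "(\<lambda>z. \<Sum>i\<in>F. f i z) \<in> Dd1" "Dd1_norm (\<lambda>z. \<Sum>i\<in>F. f i z) \<le> (\<Sum>i\<in>F. Dd1_norm (f i))"
    by auto
  have e: "(\<lambda>z. \<Sum>i\<in>insert x F. f i z) = (\<lambda>z. f x z + (\<Sum>i\<in>F. f i z))"
    using insert by simp
  show ?case unfolding e using Dd1_add[OF h(1,2)] h(3) insert by simp
qed

lemma Dd1_one: "(\<lambda>_. 1) \<in> Dd1" "Dd1_norm (\<lambda>_. 1) = 1"
proof -
  have e: "\<forall>z\<in>disc. (\<lambda>_. 1::complex) z = 1 + (z - 1) * 0" by simp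
  note I = Dd1_intro[OF H2_const(1) e]
  show "(\<lambda>_. 1) \<in> Dd1" using I by simp
  have "(Dd1_norm (\<lambda>_. 1::complex))\<^sup>2 = 1" using I(7) H2_const(2)[of 0] H2_const(2)[of 1] by simp
  from real_sqrt_unique[OF this Dd1_norm_nonneg] show "Dd1_norm (\<lambda>_. 1) = 1" by simp
qed



lemma MPhi_boundedD:
  assumes "MPhi_bounded_by \<Phi> C" "f \<in> Dd1"
  shows "\<And>j. (\<lambda>z. \<Phi> j z * f z) \<in> Dd1" "summable (\<lambda>j. (Dd1_norm (\<lambda>z. \<Phi> j z * f z))\<^sup>2)"
    "(\<Sum>j. (Dd1_norm (\<lambda>z. \<Phi> j z * f z))\<^sup>2) \<le> C\<^sup>2 * (Dd1_norm f)\<^sup>2"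
  using assms unfolding MPhi_bounded_by_def by auto

lemma pow_growth:
  fixes q c K :: real
  assumes "0 \<le> c" "0 \<le> q" "\<And>n. q ^ n \<le> c ^ n * K"
  shows "q \<le> c"
proof (rule ccontr)
  assume "\<not> q \<le> c"
  then have qc: "c < q" by simp
  show False
  proof (cases "c = 0")
    case True
    then show False using assms(3)[of 1] qc by simp
  next
    case False
    then have c0: "0 < c" using assms(1) by simp
    have x1: "1 < q / c" using qc c0 by simp
    obtain n where "K < (q / c) ^ n" using real_arch_pow[OF x1] by blast
    moreover have "(q / c) ^ n \<le> K"
      using assms(3)[of n] c0 by (simp add: power_divide divide_le_eq mult.commute)
    ultimately show False by simp
  qed
qed

lemma sup_bound_fin:
  assumes D: "\<And>j. \<Phi> j \<in> Dd1" and MB: "MPhi_bounded_by \<Phi> C" and w: "w \<in> disc"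
  shows "(\<Sum>j<N. (cmod (\<Phi> j w))\<^sup>2) \<le> C\<^sup>2"
proof -
  define s where "s = (\<Sum>j<N. (cmod (\<Phi> j w))\<^sup>2)"
  have s0: "0 \<le> s" by (simp add: s_def sum_nonneg)
  define a where "a j = cnj (\<Phi> j w)" for j
  define F where "F z = (\<Sum>j<N. a j * \<Phi> j z)" for z
  have Fw: "F w = complex_of_real s"
    unfolding F_def s_def a_def of_real_sum complex_norm_square by (simp add: mult.commute)
  have step: "(\<lambda>z. F z * h z) \<in> Dd1 \<and> Dd1_norm (\<lambda>z. F z * h z) \<le> sqrt s * \<bar>C\<bar> * Dd1_norm h"
    if h: "h \<in> Dd1" for h
  proof -
    note M = MPhi_boundedD[OF MB h]
    have e: "(\<lambda>z. F z * h z) = (\<lambda>z. \<Sum>j<N. a j * (\<Phi> j z * h z))"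
      by (simp add: F_def sum_distrib_right mult.assoc)
    have S: "(\<lambda>z. \<Sum>j<N. a j * (\<Phi> j z * h z)) \<in> Dd1 \<and>
        Dd1_norm (\<lambda>z. \<Sum>j<N. a j * (\<Phi> j z * h z)) \<le> (\<Sum>j<N. Dd1_norm (\<lambda>z. a j * (\<Phi> j z * h z)))"
      by (rule Dd1_sum) (auto intro: Dd1_cmult M(1))
    have "(\<Sum>j<N. Dd1_norm (\<lambda>z. a j * (\<Phi> j z * h z))) = (\<Sum>j<N. \<bar>cmod (a j)\<bar> * \<bar>Dd1_norm (\<lambda>z. \<Phi> j z * h z)\<bar>)"
      by (simp add: Dd1_cmult(2)[OF M(1)] Dd1_norm_nonneg)
    also have "\<dots> \<le> L2_set (\<lambda>j. cmod (a j)) {..<N} * L2_set (\<lambda>j. Dd1_norm (\<lambda>z. \<Phi> j z * h z)) {..<N}"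
      by (rule L2_set_mult_ineq)
    also have "L2_set (\<lambda>j. cmod (a j)) {..<N} = sqrt s" by (simp add: L2_set_def s_def a_def)
    also have "L2_set (\<lambda>j. Dd1_norm (\<lambda>z. \<Phi> j z * h z)) {..<N} \<le> sqrt (C\<^sup>2 * (Dd1_norm h)\<^sup>2)"
      unfolding L2_set_def
      by (intro real_sqrt_le_mono order.trans[OF sum_le_suminf[OF M(2)] M(3)]) auto
    also have "sqrt (C\<^sup>2 * (Dd1_norm h)\<^sup>2) = \<bar>C\<bar> * Dd1_norm h"
      by (simp add: real_sqrt_mult Dd1_norm_nonneg)
    finally have "(\<Sum>j<N. Dd1_norm (\<lambda>z. a j * (\<Phi> j z * h z))) \<le> sqrt s * (\<bar>C\<bar> * Dd1_norm h)"
      by (simp add: mult_left_mono s0)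
    then show ?thesis using S unfolding e by (simp add: mult.assoc)
  qed
  have pow: "(\<lambda>z. F z ^ n) \<in> Dd1 \<and> Dd1_norm (\<lambda>z. F z ^ n) \<le> (sqrt s * \<bar>C\<bar>) ^ n" for n
  proof (induction n)
    case 0
    then show ?case using Dd1_one by simp
  next
    case (Suc n)
    have e: "(\<lambda>z. F z ^ Suc n) = (\<lambda>z. F z * F z ^ n)" by simp
    have "Dd1_norm (\<lambda>z. F z * F z ^ n) \<le> sqrt s * \<bar>C\<bar> * Dd1_norm (\<lambda>z. F z ^ n)"
      using step Suc by blast
    also have "\<dots> \<le> sqrt s * \<bar>C\<bar> * (sqrt s * \<bar>C\<bar>) ^ n"
      using Suc s0 by (intro mult_left_mono) auto
    finally have "Dd1_norm (\<lambda>z. F z * F z ^ n) \<le> (sqrt s * \<bar>C\<bar>) ^ Suc n" by (simp add: mult_ac)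
    moreover have "(\<lambda>z. F z * F z ^ n) \<in> Dd1" using step Suc by blast
    ultimately show ?case unfolding e by blast
  qed
  define K where "K = 1 / sqrt (1 - (cmod w)\<^sup>2)"
  have "(cmod w)\<^sup>2 \<le> 1" using w by (simp add: power_le_one)
  then have K0: "0 \<le> K" by (simp add: K_def)
  have wl: "(cmod w)\<^sup>2 < 1" using w by (simp add: abs_square_less_1)
  then have "0 < sqrt (1 - (cmod w)\<^sup>2)" "sqrt (1 - (cmod w)\<^sup>2) \<le> 1" by auto
  then have K1: "1 \<le> K" unfolding K_def by (simp add: le_divide_eq)
  have ev: "sqrt s ^ n \<le> \<bar>C\<bar> ^ n * K" for n
  proof -
    have "s ^ n = cmod (F w ^ n)" using Fw s0 by (simp add: norm_power)
    also have "\<dots> \<le> H2_norm (\<lambda>z. F z ^ n) / sqrt (1 - (cmod w)\<^sup>2)"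
      using H2_eval[OF Dd1_elim(1)[OF conjunct1[OF pow]] w] by simp
    also have "\<dots> \<le> Dd1_norm (\<lambda>z. F z ^ n) * K"
      unfolding K_def using Dd1_norm_ge(1)[OF conjunct1[OF pow[of n]]] K0
      by (simp add: divide_right_mono K_def)
    also have "\<dots> \<le> (sqrt s * \<bar>C\<bar>) ^ n * K"
      using pow[of n] K0 by (intro mult_right_mono) auto
    finally have "sqrt s ^ n * sqrt s ^ n \<le> sqrt s ^ n * (\<bar>C\<bar> ^ n * K)"
      using s0 by (simp add: power_mult_distrib mult_ac flip: power_mult_distrib real_sqrt_mult)
    then show ?thesis
    proof (cases "s = 0")
      case True
      then show ?thesis using K0 K1 by (cases n) auto
    next
      case False
      then have "0 < sqrt s ^ n" using s0 by simp
      then show ?thesis using \<open>sqrt s ^ n * sqrt s ^ n \<le> sqrt s ^ n * (\<bar>C\<bar> ^ n * K)\<close>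
        by (simp add: mult_le_cancel_left_pos)
    qed
  qed
  have "sqrt s \<le> \<bar>C\<bar>" by (rule pow_growth[OF _ _ ev]) (use s0 in auto)
  then have "(sqrt s)\<^sup>2 \<le> \<bar>C\<bar>\<^sup>2" by (intro power_mono) (use s0 in auto)
  then show ?thesis using s0 by (simp add: s_def)
qed

lemma sup_bound:
  assumes D: "\<And>j. \<Phi> j \<in> Dd1" and MB: "MPhi_bounded_by \<Phi> C" and w: "w \<in> disc"
  shows "summable (\<lambda>j. (cmod (\<Phi> j w))\<^sup>2)" "(\<Sum>j. (cmod (\<Phi> j w))\<^sup>2) \<le> C\<^sup>2"
proof -
  show s: "summable (\<lambda>j. (cmod (\<Phi> j w))\<^sup>2)"
    by (rule summableI_nonneg_bounded[where x="C\<^sup>2"]) (use sup_bound_fin[OF D MB w] in auto)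
  show "(\<Sum>j. (cmod (\<Phi> j w))\<^sup>2) \<le> C\<^sup>2"
    by (rule suminf_le_const[OF s]) (use sup_bound_fin[OF D MB w] in auto)
qed



lemma sq_sum_le2: "((x::real) + y)\<^sup>2 \<le> 2 * x\<^sup>2 + 2 * y\<^sup>2"
proof -
  have "0 \<le> (x - y)\<^sup>2" by simp
  then show ?thesis by (simp add: power2_eq_square algebra_simps)
qed

lemma bounded_from_conds:
  assumes D: "\<And>j. \<Phi> j \<in> Dd1" and sS: "summable (\<lambda>j. (Dd1_norm (\<Phi> j))\<^sup>2)"
    and B: "\<forall>z\<in>disc. summable (\<lambda>j. (cmod (\<Phi> j z))\<^sup>2) \<and> (\<Sum>j. (cmod (\<Phi> j z))\<^sup>2) \<le> B"
  shows "MPhi_bounded_by \<Phi> (sqrt (2 * B + 4 * (\<Sum>j. (Dd1_norm (\<Phi> j))\<^sup>2)))"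
proof -
  define S where "S = (\<Sum>j. (Dd1_norm (\<Phi> j))\<^sup>2)"
  have S0: "0 \<le> S" unfolding S_def by (intro suminf_nonneg sS) auto
  have B0: "0 \<le> B" using B[rule_format, of 0] by (meson order.trans suminf_nonneg zero_le_power2 centre_in_ball zero_less_one)
  have BN: "(\<Sum>j<N. (cmod (\<Phi> j z))\<^sup>2) \<le> B" if "z \<in> disc" for N z
    using B that by (meson order.trans sum_le_suminf zero_le_power2 finite_lessThan)
  have hol: "\<Phi> j holomorphic_on disc" for j using Dd1_elim(1)[OF D] H2_hol by blast
  have C2: "(sqrt (2 * B + 4 * S))\<^sup>2 = 2 * B + 4 * S" using B0 S0 by simp
  show ?thesis unfolding MPhi_bounded_by_def S_def[symmetric] C2
  proof (intro ballI)
    fix f assume f: "f \<in> Dd1"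
    note E = Dd1_elim[OF f]
    define c where "c = bv1 f"
    define g where "g = Dd1_quot f"
    have g: "g \<in> H2" using E g_def by auto
    note MF = H2_mult_fam[OF finite_lessThan hol E(1) BN]
    note MG = H2_mult_fam[OF finite_lessThan hol g BN]
    have pf: "(\<lambda>z. \<Phi> j z * f z) \<in> H2" for j using MF[of "Suc j"] by auto
    have pg: "(\<lambda>z. \<Phi> j z * g z) \<in> H2" for j using MG[of "Suc j"] by auto
    have PE: "\<forall>z\<in>disc. \<Phi> j z = bv1 (\<Phi> j) + (z - 1) * Dd1_quot (\<Phi> j) z" for j
      using Dd1_elim(3)[OF D] by blast
    have psi: "Dd1_quot (\<Phi> j) \<in> H2" for j using Dd1_elim(2)[OF D] by blast
    define q where "q j z = \<Phi> j z * g z + c * Dd1_quot (\<Phi> j) z" for j z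
    have q: "q j \<in> H2" "H2_norm (q j) \<le> H2_norm (\<lambda>z. \<Phi> j z * g z) + cmod c * H2_norm (Dd1_quot (\<Phi> j))" for j
      using H2_add[OF pg H2_cmult(1)[OF psi]] H2_cmult(2)[OF psi] unfolding q_def by auto
    have id: "\<forall>z\<in>disc. \<Phi> j z * f z = bv1 (\<Phi> j) * c + (z - 1) * q j z" for j
    proof
      fix z :: complex assume z: "z \<in> disc"
      have hf: "f z = c + (z - 1) * g z" using E(3) z by (simp add: c_def g_def)
      have hp: "\<Phi> j z = bv1 (\<Phi> j) + (z - 1) * Dd1_quot (\<Phi> j) z" using PE z by blast
      show "\<Phi> j z * f z = bv1 (\<Phi> j) * c + (z - 1) * q j z"
        unfolding q_def hf hp by (simp add: algebra_simps)
    qed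
    note I = Dd1_intro[OF q(1) id]
    show "(\<forall>j. (\<lambda>z. \<Phi> j z * f z) \<in> Dd1) \<and> summable (\<lambda>j. (Dd1_norm (\<lambda>z. \<Phi> j z * f z))\<^sup>2) \<and>
        (\<Sum>j. (Dd1_norm (\<lambda>z. \<Phi> j z * f z))\<^sup>2) \<le> (2 * B + 4 * S) * (Dd1_norm f)\<^sup>2"
    proof (intro conjI allI)
      show "(\<lambda>z. \<Phi> j z * f z) \<in> Dd1" for j using I by blast
      have each: "(Dd1_norm (\<lambda>z. \<Phi> j z * f z))\<^sup>2 \<le> (H2_norm (\<lambda>z. \<Phi> j z * f z))\<^sup>2
          + 2 * (H2_norm (\<lambda>z. \<Phi> j z * g z))\<^sup>2 + 2 * (cmod c)\<^sup>2 * (Dd1_norm (\<Phi> j))\<^sup>2" for j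
      proof -
        have "(H2_norm (q j))\<^sup>2 \<le> (H2_norm (\<lambda>z. \<Phi> j z * g z) + cmod c * H2_norm (Dd1_quot (\<Phi> j)))\<^sup>2"
          using q(2)[of j] H2_norm_nonneg[OF q(1)[of j]] by (intro power_mono) auto
        also have "\<dots> \<le> 2 * (H2_norm (\<lambda>z. \<Phi> j z * g z))\<^sup>2 + 2 * (cmod c * H2_norm (Dd1_quot (\<Phi> j)))\<^sup>2"
          by (rule sq_sum_le2)
        also have "(cmod c * H2_norm (Dd1_quot (\<Phi> j)))\<^sup>2 \<le> (cmod c)\<^sup>2 * (Dd1_norm (\<Phi> j))\<^sup>2"
          unfolding power_mult_distrib
          using Dd1_norm_ge(2)[OF D, of j] H2_norm_nonneg[OF psi[of j]]
          by (intro mult_left_mono power_mono) auto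
        finally show ?thesis using I(7)[of j] by simp
      qed
      have fin: "(\<Sum>j<N. (Dd1_norm (\<lambda>z. \<Phi> j z * f z))\<^sup>2) \<le> (2 * B + 4 * S) * (Dd1_norm f)\<^sup>2" for N
      proof -
        have "(\<Sum>j<N. (Dd1_norm (\<lambda>z. \<Phi> j z * f z))\<^sup>2) \<le>
            (\<Sum>j<N. (H2_norm (\<lambda>z. \<Phi> j z * f z))\<^sup>2) + 2 * (\<Sum>j<N. (H2_norm (\<lambda>z. \<Phi> j z * g z))\<^sup>2)
            + 2 * (cmod c)\<^sup>2 * (\<Sum>j<N. (Dd1_norm (\<Phi> j))\<^sup>2)"
          using sum_mono[where K="{..<N}", OF each] by (simp add: sum.distrib sum_distrib_left)
        also have "\<dots> \<le> B * (H2_norm f)\<^sup>2 + 2 * (B * (H2_norm g)\<^sup>2) + 2 * (2 * (Dd1_norm f)\<^sup>2) * S"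
        proof (intro add_mono mult_left_mono mult_mono)
          show "(\<Sum>j<N. (H2_norm (\<lambda>z. \<Phi> j z * f z))\<^sup>2) \<le> B * (H2_norm f)\<^sup>2" using MF[of N] by simp
          show "(\<Sum>j<N. (H2_norm (\<lambda>z. \<Phi> j z * g z))\<^sup>2) \<le> B * (H2_norm g)\<^sup>2" using MG[of N] by simp
          show "(cmod c)\<^sup>2 \<le> 2 * (Dd1_norm f)\<^sup>2" using bv1_bound(2)[OF f] by (simp add: c_def)
          show "(\<Sum>j<N. (Dd1_norm (\<Phi> j))\<^sup>2) \<le> S" unfolding S_def by (rule sum_le_suminf[OF sS]) auto
        qed (auto simp: S0 sum_nonneg)
        also have "\<dots> \<le> (2 * B + 4 * S) * (Dd1_norm f)\<^sup>2"
          using E(4) B0 S0 unfolding g_def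
          by (simp add: algebra_simps mult_left_mono)
        finally show ?thesis .
      qed
      show s: "summable (\<lambda>j. (Dd1_norm (\<lambda>z. \<Phi> j z * f z))\<^sup>2)"
        by (rule summableI_nonneg_bounded[OF _ fin]) auto
      show "(\<Sum>j. (Dd1_norm (\<lambda>z. \<Phi> j z * f z))\<^sup>2) \<le> (2 * B + 4 * S) * (Dd1_norm f)\<^sup>2"
        by (rule suminf_le_const[OF s fin])
    qed
  qed
qed



lemma one_case:
  assumes "MPhi_bounded_by \<Phi> C"
  shows "summable (\<lambda>j. (Dd1_norm (\<Phi> j))\<^sup>2)" "(\<Sum>j. (Dd1_norm (\<Phi> j))\<^sup>2) \<le> C\<^sup>2"
  using MPhi_boundedD[OF assms Dd1_one(1)] Dd1_one(2) by simp_all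

lemma eval_sq:
  assumes "h \<in> H2" "z \<in> disc"
  shows "(cmod (h z))\<^sup>2 \<le> (H2_norm h)\<^sup>2 / (1 - (cmod z)\<^sup>2)"
proof -
  have p: "0 < 1 - (cmod z)\<^sup>2" using assms(2) by (simp add: abs_square_less_1)
  have "(cmod (h z))\<^sup>2 \<le> (H2_norm h / sqrt (1 - (cmod z)\<^sup>2))\<^sup>2"
    using H2_eval[OF assms] by (intro power_mono) auto
  also have "\<dots> = (H2_norm h)\<^sup>2 / (1 - (cmod z)\<^sup>2)" using p by (simp add: power_divide)
  finally show ?thesis .
qed

lemma aux_frac: "(a::real) \<noteq> 0 \<Longrightarrow> b \<noteq> 0 \<Longrightarrow> a\<^sup>2 * (x / (a * b)) = a / b * x"
  by (simp add: field_simps power2_eq_square)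

lemma part2:
  assumes D: "\<And>j. \<Phi> j \<in> Dd1" and MB: "MPhi_bounded_by \<Phi> 1" and e: "0 < \<epsilon>\<^sup>2"
    and low: "\<forall>z\<in>disc. \<epsilon>\<^sup>2 \<le> (\<Sum>j. (cmod (\<Phi> j z))\<^sup>2)"
  shows "\<exists>j. bv1 (\<Phi> j) \<noteq> 0"
proof (rule ccontr)
  assume "\<not> (\<exists>j. bv1 (\<Phi> j) \<noteq> 0)"
  then have z0: "bv1 (\<Phi> j) = 0" for j by blast
  note S = one_case[OF MB]
  define r where "r = 1 - min (1/2) (\<epsilon>\<^sup>2/2)"
  have r: "1/2 \<le> r" "r < 1" using e by (auto simp: r_def)
  define z where "z = complex_of_real r"
  have zd: "z \<in> disc" using r by (simp add: z_def)
  have cz: "cmod z = r" using r by (simp add: z_def)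
  have le: "(cmod (\<Phi> j z))\<^sup>2 \<le> (1 - r) * (Dd1_norm (\<Phi> j))\<^sup>2" for j
  proof -
    note E = Dd1_elim[OF D[of j]]
    have "\<Phi> j z = (z - 1) * Dd1_quot (\<Phi> j) z" using E(3) zd z0 by auto
    then have "(cmod (\<Phi> j z))\<^sup>2 = (1 - r)\<^sup>2 * (cmod (Dd1_quot (\<Phi> j) z))\<^sup>2"
    proof -
      assume h: "\<Phi> j z = (z - 1) * Dd1_quot (\<Phi> j) z"
      have "cmod (z - 1) = \<bar>r - 1\<bar>" unfolding z_def by (metis norm_of_real of_real_1 of_real_diff)
      then have "cmod (z - 1) = 1 - r" using r by simp
      then show ?thesis unfolding h norm_mult power_mult_distrib by simp
    qed
    also have "\<dots> \<le> (1 - r)\<^sup>2 * ((H2_norm (Dd1_quot (\<Phi> j)))\<^sup>2 / (1 - r\<^sup>2))"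
      using eval_sq[OF E(2) zd] cz by (intro mult_left_mono) auto
    also have "\<dots> = (1 - r) / (1 + r) * (H2_norm (Dd1_quot (\<Phi> j)))\<^sup>2"
    proof -
      have "1 - r\<^sup>2 = (1 - r) * (1 + r)" by (simp add: power2_eq_square algebra_simps)
      then show ?thesis using r aux_frac[of "1 - r" "1 + r"] by simp
    qed
    also have "\<dots> \<le> (1 - r) * (Dd1_norm (\<Phi> j))\<^sup>2"
    proof (rule mult_mono)
      show "(1 - r) / (1 + r) \<le> 1 - r" using r by (simp add: divide_le_eq)
      show "(H2_norm (Dd1_quot (\<Phi> j)))\<^sup>2 \<le> (Dd1_norm (\<Phi> j))\<^sup>2"
        using Dd1_norm_ge(2)[OF D] H2_norm_nonneg[OF E(2)] by (intro power_mono) auto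
    qed (use r in auto)
    finally show ?thesis .
  qed
  have sm: "summable (\<lambda>j. (1 - r) * (Dd1_norm (\<Phi> j))\<^sup>2)" by (rule summable_mult[OF S(1)])
  have s: "summable (\<lambda>j. (cmod (\<Phi> j z))\<^sup>2)"
    by (rule summable_comparison_test'[OF sm, of 0]) (use le in simp)
  have "(\<Sum>j. (cmod (\<Phi> j z))\<^sup>2) \<le> (\<Sum>j. (1 - r) * (Dd1_norm (\<Phi> j))\<^sup>2)"
    by (rule suminf_le[OF le s sm])
  also have "\<dots> = (1 - r) * (\<Sum>j. (Dd1_norm (\<Phi> j))\<^sup>2)" by (rule suminf_mult[OF S(1)])
  also have "\<dots> \<le> (1 - r) * 1" using S(2) r by (intro mult_left_mono) auto
  also have "\<dots> < \<epsilon>\<^sup>2" using e by (simp add: r_def min_def)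
  finally show False using low zd by force
qed



lemma Kmono:
  assumes "0 \<le> t" "t \<le> \<rho>" "\<rho> < 1"
  shows "1 / sqrt (1 - t\<^sup>2) \<le> 1 / sqrt (1 - \<rho>\<^sup>2)"
proof -
  have "t\<^sup>2 \<le> \<rho>\<^sup>2" using assms by (intro power_mono) auto
  moreover have "\<rho>\<^sup>2 < 1" using assms by (simp add: abs_square_less_1)
  ultimately have p: "0 < sqrt (1 - \<rho>\<^sup>2)" and q: "sqrt (1 - \<rho>\<^sup>2) \<le> sqrt (1 - t\<^sup>2)" by auto
  have "0 < sqrt (1 - t\<^sup>2) * sqrt (1 - \<rho>\<^sup>2)" using p q by (simp add: mult_pos_pos)
  then show ?thesis by (intro divide_left_mono q) simp_all
qed

lemma eval_K:
  assumes "h \<in> H2" "z \<in> disc" "cmod z \<le> \<rho>" "\<rho> < 1"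
  shows "cmod (h z) \<le> H2_norm h * (1 / sqrt (1 - \<rho>\<^sup>2))"
proof -
  have "cmod (h z) \<le> H2_norm h / sqrt (1 - (cmod z)\<^sup>2)" by (rule H2_eval[OF assms(1,2)])
  also have "\<dots> = H2_norm h * (1 / sqrt (1 - (cmod z)\<^sup>2))" by simp
  also have "\<dots> \<le> H2_norm h * (1 / sqrt (1 - \<rho>\<^sup>2))"
    by (intro mult_left_mono Kmono H2_norm_nonneg assms) auto
  finally show ?thesis .
qed

lemma mean_conv:
  assumes hol: "\<And>N. Gs N holomorphic_on disc" "G holomorphic_on disc" and r: "0 \<le> r" "r < 1"
    and d: "\<And>N w. w \<in> disc \<Longrightarrow> cmod w = r \<Longrightarrow> cmod (Gs N w - G w) \<le> d N"
    and b1: "\<And>N w. w \<in> disc \<Longrightarrow> cmod w = r \<Longrightarrow> cmod (Gs N w) \<le> T"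
    and b2: "\<And>w. w \<in> disc \<Longrightarrow> cmod w = r \<Longrightarrow> cmod (G w) \<le> T"
    and d0: "d \<longlonglongrightarrow> 0"
  shows "(\<lambda>N. mean r (Gs N)) \<longlonglongrightarrow> mean r G"
proof -
  let ?w = "\<lambda>t. complex_of_real r * cis t"
  have wd: "?w t \<in> disc" "cmod (?w t) = r" for t using r by (auto simp: norm_mult)
  have "(\<lambda>N. integral {0..2*pi} (\<lambda>t. (cmod (Gs N (?w t)))\<^sup>2)) \<longlonglongrightarrow> integral {0..2*pi} (\<lambda>t. (cmod (G (?w t)))\<^sup>2)"
  proof (rule int_unif_conv[where e = "\<lambda>N. d N * (2 * T)"])
    show "continuous_on {0..2*pi} (\<lambda>t. (cmod (Gs N (?w t)))\<^sup>2)" for N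
      by (rule cont_circ[OF holomorphic_on_imp_continuous_on[OF hol(1)] r])
    show "continuous_on {0..2*pi} (\<lambda>t. (cmod (G (?w t)))\<^sup>2)"
      by (rule cont_circ[OF holomorphic_on_imp_continuous_on[OF hol(2)] r])
    fix N t
    have "\<bar>(cmod (Gs N (?w t)))\<^sup>2 - (cmod (G (?w t)))\<^sup>2\<bar> = \<bar>cmod (Gs N (?w t)) - cmod (G (?w t))\<bar> * (cmod (Gs N (?w t)) + cmod (G (?w t)))"
      by (rule sq_diff_abs) auto
    also have "\<dots> \<le> d N * (2 * T)"
    proof (rule mult_mono)
      show "\<bar>cmod (Gs N (?w t)) - cmod (G (?w t))\<bar> \<le> d N"
        using norm_triangle_ineq3[of "Gs N (?w t)" "G (?w t)"] d[OF wd(1)[of t] wd(2)[of t], of N] by linarith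
      show "cmod (Gs N (?w t)) + cmod (G (?w t)) \<le> 2 * T" using b1[OF wd(1)[of t] wd(2)[of t], of N] b2[OF wd(1)[of t] wd(2)[of t]] by simp
      show "0 \<le> d N" using d[OF wd(1)[of t] wd(2)[of t], of N] norm_ge_zero[of "Gs N (?w t) - G (?w t)"] by linarith
    qed simp
    finally show "\<bar>(cmod (Gs N (?w t)))\<^sup>2 - (cmod (G (?w t)))\<^sup>2\<bar> \<le> d N * (2 * T)" .
  next
    show "(\<lambda>N. d N * (2 * T)) \<longlonglongrightarrow> 0" using tendsto_mult[OF d0 tendsto_const[of "2*T"]] by simp
  qed
  then show ?thesis unfolding mean_def by (intro tendsto_divide tendsto_const) auto
qed

lemma part3:
  assumes D: "\<And>j. \<Phi> j \<in> Dd1" and MB: "MPhi_bounded_by \<Phi> 1"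
  shows "(\<lambda>z. \<Sum>i. (\<Phi> i z - bv1 (\<Phi> i)) * cnj (bv1 (\<Phi> i))) \<in> MDd1 \<and>
         bv1 (\<lambda>z. \<Sum>i. (\<Phi> i z - bv1 (\<Phi> i)) * cnj (bv1 (\<Phi> i))) = 0"
proof -
  define c where "c i = bv1 (\<Phi> i)" for i
  define \<psi> where "\<psi> i = Dd1_quot (\<Phi> i)" for i
  define f where "f = (\<lambda>z. \<Sum>i. (\<Phi> i z - c i) * cnj (c i))"
  note S = one_case[OF MB]
  have psiH: "\<psi> i \<in> H2" for i using Dd1_elim(2)[OF D] by (simp add: \<psi>_def)
  have PE: "\<forall>z\<in>disc. \<Phi> i z = c i + (z - 1) * \<psi> i z" for i
    using Dd1_elim(3)[OF D] by (simp add: c_def \<psi>_def)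
  have c2: "(cmod (c i))\<^sup>2 \<le> 2 * (Dd1_norm (\<Phi> i))\<^sup>2" for i using bv1_bound(2)[OF D] by (simp add: c_def)
  have p2: "(H2_norm (\<psi> i))\<^sup>2 \<le> (Dd1_norm (\<Phi> i))\<^sup>2" for i
    using Dd1_norm_ge(2)[OF D] H2_norm_nonneg[OF psiH] by (intro power_mono) (auto simp: \<psi>_def)
  have sc: "summable (\<lambda>i. (cmod (c i))\<^sup>2)"
    by (rule summable_comparison_test'[OF summable_mult[OF S(1), of 2], of 0]) (use c2 in simp)
  have sc2: "(\<Sum>i. (cmod (c i))\<^sup>2) \<le> 2"
  proof -
    have "(\<Sum>i. (cmod (c i))\<^sup>2) \<le> (\<Sum>i. 2 * (Dd1_norm (\<Phi> i))\<^sup>2)"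
      by (rule suminf_le[OF c2 sc summable_mult[OF S(1)]])
    also have "\<dots> = 2 * (\<Sum>i. (Dd1_norm (\<Phi> i))\<^sup>2)" by (rule suminf_mult[OF S(1)])
    also have "\<dots> \<le> 2" using S(2) by simp
    finally show ?thesis .
  qed
  have sp: "summable (\<lambda>i. (H2_norm (\<psi> i))\<^sup>2)"
    by (rule summable_comparison_test'[OF S(1), of 0]) (use p2 in simp)
  define m where "m i = cmod (c i) * H2_norm (\<psi> i)" for i
  have m0: "0 \<le> m i" for i using H2_norm_nonneg[OF psiH] by (simp add: m_def)
  have sm: "summable m" using CS_inf(1)[OF sc sp] m0 H2_norm_nonneg[OF psiH] unfolding m_def[abs_def] by (simp add: abs_mult)
  define T where "T = suminf m"
  have mT: "sum m {..<N} \<le> T" for N unfolding T_def by (rule sum_le_suminf[OF sm]) (auto simp: m0)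
  have T0: "0 \<le> T" using mT[of 0] by simp
  define Kf where "Kf \<rho> = 1 / sqrt (1 - \<rho>\<^sup>2)" for \<rho> :: real
  have Kf0: "0 \<le> Kf \<rho>" if "\<rho> < 1" "0 \<le> \<rho>" for \<rho>
  proof -
    have "\<rho>\<^sup>2 < 1" using that by (simp add: abs_square_less_1)
    then show ?thesis by (simp add: Kf_def)
  qed
  have tb: "cmod (cnj (c i) * \<psi> i z) \<le> m i * Kf \<rho>" if "z \<in> disc" "cmod z \<le> \<rho>" "\<rho> < 1" for i z \<rho>
  proof -
    have "cmod (cnj (c i) * \<psi> i z) = cmod (c i) * cmod (\<psi> i z)" by (simp add: norm_mult)
    also have "\<dots> \<le> cmod (c i) * (H2_norm (\<psi> i) * Kf \<rho>)"
      using eval_K[OF psiH that] by (intro mult_left_mono) (auto simp: Kf_def)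
    finally show ?thesis by (simp add: m_def mult.assoc)
  qed
  define G where "G = (\<lambda>z. \<Sum>i. cnj (c i) * \<psi> i z)"
  define Gs where "Gs = (\<lambda>N z. \<Sum>i<N. cnj (c i) * \<psi> i z)"
  have snG: "summable (\<lambda>i. norm (cnj (c i) * \<psi> i z))" if "z \<in> disc" for z
    by (rule summable_comparison_test'[OF summable_mult2[OF sm, of "Kf (cmod z)"], of 0])
       (use tb[OF that order.refl] that in simp)
  have tail: "cmod (Gs N z - G z) \<le> (T - sum m {..<N}) * Kf \<rho>" if z: "z \<in> disc" "cmod z \<le> \<rho>" "\<rho> < 1" for N z \<rho>
  proof -
    let ?f = "\<lambda>i. cnj (c i) * \<psi> i z"
    have e: "G z - Gs N z = (\<Sum>n. ?f (n + N))"
      unfolding G_def Gs_def using suminf_split_initial_segment[OF summable_norm_cancel[OF snG[OF z(1)]], of N] by simp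
    have sk: "summable (\<lambda>n. norm (?f (n + N)))" using summable_ignore_initial_segment[OF snG[OF z(1)], of N] by simp
    have smk: "summable (\<lambda>n. m (n + N) * Kf \<rho>)"
      using summable_mult2[OF summable_ignore_initial_segment[OF sm, of N], of "Kf \<rho>"] by simp
    have "cmod (Gs N z - G z) = norm (\<Sum>n. ?f (n + N))" by (simp add: norm_minus_commute flip: e)
    also have "\<dots> \<le> (\<Sum>n. norm (?f (n + N)))" by (rule summable_norm[OF sk])
    also have "\<dots> \<le> (\<Sum>n. m (n + N) * Kf \<rho>)" by (rule suminf_le[OF _ sk smk]) (use tb[OF z] in simp)
    also have "\<dots> = (\<Sum>n. m (n + N)) * Kf \<rho>" by (rule suminf_mult2[OF summable_ignore_initial_segment[OF sm], symmetric])
    also have "(\<Sum>n. m (n + N)) = T - sum m {..<N}"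
      unfolding T_def using suminf_split_initial_segment[OF sm, of N] by simp
    finally show ?thesis .
  qed
  have Gsb: "cmod (Gs N z) \<le> T * Kf \<rho>" if z: "z \<in> disc" "cmod z \<le> \<rho>" "\<rho> < 1" for N z \<rho>
  proof -
    have "cmod (Gs N z) \<le> (\<Sum>i<N. cmod (cnj (c i) * \<psi> i z))" unfolding Gs_def by (rule norm_sum)
    also have "\<dots> \<le> (\<Sum>i<N. m i * Kf \<rho>)" by (intro sum_mono tb z)
    also have "\<dots> = sum m {..<N} * Kf \<rho>" by (simp add: sum_distrib_right)
    also have "\<dots> \<le> T * Kf \<rho>" using mT Kf0[OF z(3)] z norm_ge_zero[of z] by (intro mult_right_mono) auto
    finally show ?thesis .
  qed
  have Gb: "cmod (G z) \<le> T * Kf \<rho>" if z: "z \<in> disc" "cmod z \<le> \<rho>" "\<rho> < 1" for z \<rho>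
  proof -
    have "cmod (G z) \<le> (\<Sum>i. cmod (cnj (c i) * \<psi> i z))" unfolding G_def by (rule summable_norm[OF snG[OF z(1)]])
    also have "\<dots> \<le> (\<Sum>i. m i * Kf \<rho>)" by (rule suminf_le[OF _ snG[OF z(1)] summable_mult2[OF sm]]) (use tb[OF z] in simp)
    also have "\<dots> = T * Kf \<rho>" unfolding T_def by (rule suminf_mult2[OF sm, symmetric])
    finally show ?thesis .
  qed
  have holpsi: "\<psi> i holomorphic_on disc" for i using psiH H2_hol by blast
  have holGs: "Gs N holomorphic_on disc" for N unfolding Gs_def
    by (intro holomorphic_intros holpsi)
  have holG: "G holomorphic_on disc"
  proof (rule holomorphic_uniform_sequence[OF open_ball holGs])
    fix x :: complex assume x: "x \<in> disc"
    define d where "d = (1 - cmod x) / 2"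
    define \<rho> where "\<rho> = (1 + cmod x) / 2"
    have d0: "0 < d" and \<rho>1: "\<rho> < 1" using x by (auto simp: d_def \<rho>_def)
    have cb: "cball x d \<subseteq> disc"
    proof
      fix z assume "z \<in> cball x d"
      then have "cmod z \<le> cmod x + d" using norm_triangle_ineq2[of z x] by (auto simp: dist_norm norm_minus_commute)
      moreover have "cmod x + d < 1" using x by (simp add: d_def field_simps)
      ultimately have "cmod z < 1" by linarith
      then show "z \<in> disc" by simp
    qed
    have cbr: "cmod z \<le> \<rho>" if "z \<in> cball x d" for z
      using that norm_triangle_ineq2[of z x] by (auto simp: dist_norm norm_minus_commute d_def \<rho>_def)
    have "uniform_limit (cball x d) (\<lambda>n z. \<Sum>i<n. cnj (c i) * \<psi> i z) (\<lambda>z. \<Sum>i. cnj (c i) * \<psi> i z) sequentially"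
      by (rule Weierstrass_m_test[OF _ summable_mult2[OF sm, of "Kf \<rho>"]])
         (use tb cb cbr \<rho>1 in blast)
    then show "\<exists>d>0. cball x d \<subseteq> disc \<and> uniform_limit (cball x d) Gs G sequentially"
      using d0 cb unfolding Gs_def G_def by blast
  qed
  have GsH: "Gs N \<in> H2" "H2_norm (Gs N) \<le> T" for N
  proof -
    have i: "(\<lambda>z. cnj (c i) * \<psi> i z) \<in> H2" for i by (rule H2_cmult(1)[OF psiH])
    note Hs = H2_sum[of "{..<N}" "\<lambda>i z. cnj (c i) * \<psi> i z", OF i finite_lessThan]
    show "Gs N \<in> H2" unfolding Gs_def using Hs(1) by simp
    have "H2_norm (Gs N) \<le> (\<Sum>i<N. H2_norm (\<lambda>z. cnj (c i) * \<psi> i z))" unfolding Gs_def using Hs(2) by simp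
    also have "\<dots> = sum m {..<N}" by (simp add: H2_cmult(2)[OF psiH] m_def)
    also have "\<dots> \<le> T" by (rule mT)
    finally show "H2_norm (Gs N) \<le> T" .
  qed
  have GH: "G \<in> H2"
  proof -
    have "mean r G \<le> T\<^sup>2" if r: "0 \<le> r" "r < 1" for r
    proof -
      have conv: "(\<lambda>N. mean r (Gs N)) \<longlonglongrightarrow> mean r G"
      proof (rule mean_conv[OF holGs holG r, where d = "\<lambda>N. (T - sum m {..<N}) * Kf r" and T = "T * Kf r"])
        show "cmod (Gs N w - G w) \<le> (T - sum m {..<N}) * Kf r" if "w \<in> disc" "cmod w = r" for N w
          using tail[of w r N] that r by simp
        show "cmod (Gs N w) \<le> T * Kf r" if "w \<in> disc" "cmod w = r" for N w
          using Gsb[of w r N] that r by simp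
        show "cmod (G w) \<le> T * Kf r" if "w \<in> disc" "cmod w = r" for w
          using Gb[of w r] that r by simp
        have "(\<lambda>N. T - sum m {..<N}) \<longlonglongrightarrow> T - T" unfolding T_def
          by (intro tendsto_diff tendsto_const summable_LIMSEQ sm)
        from tendsto_mult[OF this tendsto_const[of "Kf r"]]
        show "(\<lambda>N. (T - sum m {..<N}) * Kf r) \<longlonglongrightarrow> 0" by simp
      qed
      have "mean r (Gs N) \<le> T\<^sup>2" for N
      proof -
        have "mean r (Gs N) \<le> (H2_norm (Gs N))\<^sup>2" by (rule mean_le_H2[OF GsH(1) r])
        also have "\<dots> \<le> T\<^sup>2" using GsH(2)[of N] H2_norm_nonneg[OF GsH(1)[of N]] by (intro power_mono) auto
        finally show ?thesis .
      qed
      then show ?thesis using LIMSEQ_le_const2[OF conv] by blast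
    qed
    then have "\<forall>j\<in>{()}. (\<lambda>_. G) j \<in> H2"
      by (intro H2_from_means(1)[of "{()}" "\<lambda>_. G" "T\<^sup>2"]) (auto simp: holG)
    then show ?thesis by simp
  qed
  have fG: "\<forall>z\<in>disc. f z = 0 + (z - 1) * G z"
  proof
    fix z :: complex assume z: "z \<in> disc"
    have "f z = (\<Sum>i. (z - 1) * (cnj (c i) * \<psi> i z))"
      unfolding f_def
    proof (intro suminf_cong)
      fix n
      have h: "\<Phi> n z = c n + (z - 1) * \<psi> n z" using PE z by blast
      show "(\<Phi> n z - c n) * cnj (c n) = (z - 1) * (cnj (c n) * \<psi> n z)"
        unfolding h by (simp add: algebra_simps)
    qed
    also have "\<dots> = (z - 1) * G z" unfolding G_def
      by (rule suminf_mult[OF summable_norm_cancel[OF snG[OF z]]])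
    finally show "f z = 0 + (z - 1) * G z" by simp
  qed
  note I = Dd1_intro[OF GH fG]
  have bnd: "cmod (f z) \<le> 4" if z: "z \<in> disc" for z
  proof -
    note SB = sup_bound[OF D MB z]
    note CS = CS_inf[OF SB(1) sc]
    have sc2': "summable (\<lambda>i. (cmod (c i))\<^sup>2)" by (rule sc)
    let ?t = "\<lambda>i. (\<Phi> i z - c i) * cnj (c i)"
    have tl: "norm (?t i) \<le> \<bar>cmod (\<Phi> i z) * cmod (c i)\<bar> + (cmod (c i))\<^sup>2" for i
    proof -
      have "norm (?t i) = cmod (\<Phi> i z - c i) * cmod (c i)" by (simp add: norm_mult)
      also have "\<dots> \<le> (cmod (\<Phi> i z) + cmod (c i)) * cmod (c i)"
        by (intro mult_right_mono norm_triangle_ineq4) auto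
      finally show ?thesis by (simp add: algebra_simps power2_eq_square)
    qed
    have sr: "summable (\<lambda>i. \<bar>cmod (\<Phi> i z) * cmod (c i)\<bar> + (cmod (c i))\<^sup>2)"
      by (intro summable_add CS(1) sc)
    have st: "summable (\<lambda>i. norm (?t i))"
      by (rule summable_comparison_test'[OF sr, of 0]) (use tl in simp)
    have "cmod (f z) \<le> (\<Sum>i. norm (?t i))" unfolding f_def by (rule summable_norm[OF st])
    also have "\<dots> \<le> (\<Sum>i. \<bar>cmod (\<Phi> i z) * cmod (c i)\<bar> + (cmod (c i))\<^sup>2)"
      by (rule suminf_le[OF tl st sr])
    also have "\<dots> = (\<Sum>i. \<bar>cmod (\<Phi> i z) * cmod (c i)\<bar>) + (\<Sum>i. (cmod (c i))\<^sup>2)"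
      by (rule suminf_add[OF CS(1) sc, symmetric])
    also have "\<dots> \<le> sqrt 1 * sqrt 4 + 2"
    proof (rule add_mono[OF order.trans[OF CS(2)] sc2])
      show "sqrt (\<Sum>j. (cmod (\<Phi> j z))\<^sup>2) * sqrt (\<Sum>n. (cmod (c n))\<^sup>2) \<le> sqrt 1 * sqrt 4"
        using SB(2) sc2 suminf_nonneg[OF sc] by (intro mult_mono real_sqrt_le_mono) auto
    qed
    also have "\<dots> = 4" by simp
    finally show ?thesis .
  qed
  have "bounded (f ` disc)" unfolding bounded_iff using bnd by blast
  then have "f \<in> MDd1 \<and> bv1 f = 0" using I by (simp add: MDd1_def)
  then show ?thesis by (simp add: f_def c_def)
qed



theorem lemma3p2:
  fixes \<Phi> :: "nat \<Rightarrow> complex \<Rightarrow> complex"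
  assumes mult: "\<forall>j. \<Phi> j \<in> MDd1"
  shows
   "(MPhi_bounded \<Phi> \<longleftrightarrow>
       (summable (\<lambda>j. (Dd1_norm (\<Phi> j))\<^sup>2) \<and>
        (\<exists>B. \<forall>z\<in>disc. summable (\<lambda>j. (cmod (\<Phi> j z))\<^sup>2) \<and> (\<Sum>j. (cmod (\<Phi> j z))\<^sup>2) \<le> B)))
    \<and> (\<forall>\<epsilon>::real. MPhi_bounded_by \<Phi> 1 \<and> 0 < \<epsilon>\<^sup>2 \<and>
          (\<forall>z\<in>disc. \<epsilon>\<^sup>2 \<le> (\<Sum>j. (cmod (\<Phi> j z))\<^sup>2))
        \<longrightarrow> (\<exists>j. bv1 (\<Phi> j) \<noteq> 0))
    \<and> (\<forall>f. MPhi_bounded_by \<Phi> 1 \<and>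
          f = (\<lambda>z. \<Sum>i. (\<Phi> i z - bv1 (\<Phi> i)) * cnj (bv1 (\<Phi> i)))
        \<longrightarrow> f \<in> MDd1 \<and> bv1 f = 0)"
proof -
  have D: "\<And>j. \<Phi> j \<in> Dd1" using mult by (simp add: MDd1_def)
  have P1: "MPhi_bounded \<Phi> \<longleftrightarrow>
       (summable (\<lambda>j. (Dd1_norm (\<Phi> j))\<^sup>2) \<and>
        (\<exists>B. \<forall>z\<in>disc. summable (\<lambda>j. (cmod (\<Phi> j z))\<^sup>2) \<and> (\<Sum>j. (cmod (\<Phi> j z))\<^sup>2) \<le> B))"
  proof
    assume "MPhi_bounded \<Phi>"
    then obtain C where MB: "MPhi_bounded_by \<Phi> C" by (auto simp: MPhi_bounded_def)
    show "summable (\<lambda>j. (Dd1_norm (\<Phi> j))\<^sup>2) \<and>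
        (\<exists>B. \<forall>z\<in>disc. summable (\<lambda>j. (cmod (\<Phi> j z))\<^sup>2) \<and> (\<Sum>j. (cmod (\<Phi> j z))\<^sup>2) \<le> B)"
      using one_case(1)[OF MB] sup_bound[OF D MB] by blast
  next
    assume R: "summable (\<lambda>j. (Dd1_norm (\<Phi> j))\<^sup>2) \<and>
        (\<exists>B. \<forall>z\<in>disc. summable (\<lambda>j. (cmod (\<Phi> j z))\<^sup>2) \<and> (\<Sum>j. (cmod (\<Phi> j z))\<^sup>2) \<le> B)"
    then obtain B where B: "\<forall>z\<in>disc. summable (\<lambda>j. (cmod (\<Phi> j z))\<^sup>2) \<and> (\<Sum>j. (cmod (\<Phi> j z))\<^sup>2) \<le> B"
      by blast
    show "MPhi_bounded \<Phi>"
      using bounded_from_conds[OF D conjunct1[OF R] B] by (auto simp: MPhi_bounded_def)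
  qed
  have P2: "\<forall>\<epsilon>::real. MPhi_bounded_by \<Phi> 1 \<and> 0 < \<epsilon>\<^sup>2 \<and>
          (\<forall>z\<in>disc. \<epsilon>\<^sup>2 \<le> (\<Sum>j. (cmod (\<Phi> j z))\<^sup>2))
        \<longrightarrow> (\<exists>j. bv1 (\<Phi> j) \<noteq> 0)"
    using part2[of \<Phi>, OF D] by blast
  have P3: "\<forall>f. MPhi_bounded_by \<Phi> 1 \<and>
          f = (\<lambda>z. \<Sum>i. (\<Phi> i z - bv1 (\<Phi> i)) * cnj (bv1 (\<Phi> i)))
        \<longrightarrow> f \<in> MDd1 \<and> bv1 f = 0"
    using part3[of \<Phi>, OF D] by blast
  show ?thesis using P1 P2 P3 by blast
qed

end
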